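(* Let $0<\rho<\tfrac12$, and in the setting below assume (A.1), (A.2), (A.4), and (A.3): $r>0$ and the minimal truncation order $p^*$ and coefficients $\boldsymbol\theta^*_{p^*}\in B_{p^*,r}$ with $\mathcal R_{p^*}(\boldsymbol\theta^*_{p^*})=\inf_{p,\boldsymbol\theta_p}\mathcal R_p(\boldsymbol\theta_p)$ exist. Let $C=2(C_{\mathbf z}+e^{C_{\mathbf X}+T})$, $L(p)=\min_{\boldsymbol\theta_p\in B_{p,r}}\mathcal R_p(\boldsymbol\theta_p)$, $\widetilde{\mathcal R}^*=\mathcal R_{p^*}(\boldsymbol\theta^*_{p^*})$, and let $n_3$ be the smallest integer satisfying $$n_3\ge\left(\frac{2\sqrt{s_d(p^* )+q}}{L(p^*-1)-\widetilde{\mathcal R}^*}\big(\sqrt{e^q}C_{\mathrm{pen}}+432Cr\sqrt\pi\big)\right)^{1/\rho}.$$ Then for any $p<p^*$ and $n\ge n_3$, $$\mathbb P(\widehat p=p)\le148\exp\left(-n\frac{c_5}{4}\big(L(p)-L(p^* )-\mathrm{pen}_n(p^*,q)+\mathrm{pen}_n(p,q)\big)^2\right),\qquad c_5=\frac{1}{8r(288C^2r+C)}.$$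
   Context: Let $T>0$, integers $d\ge2$, $q\ge1$. $(\mathbf X,\mathbf z,y)$ is a random triple: $\mathbf X:[0,T]\to\mathbb R^{d-1}$ a continuous bounded-variation path with fixed initial value, $\mathbf z\in\mathbb R^q$, $y\in\{0,1\}$, with $\operatorname{logit}\mathbb P(y=1\mid\mathbf X,\mathbf z)=F(\mathbf X)+\mathbf z^\top\boldsymbol\gamma$ for a continuous functional $F$ and $\boldsymbol\gamma\in\mathbb R^q$. (A.1): $\|F\|_\infty<C_F$, $\|\boldsymbol\gamma\|_1\le C_{\boldsymbol\gamma}$. (A.2): $\|\mathbf X\|_{\mathrm{TV}}<C_{\mathbf X}$ and $\|\mathbf z\|<C_{\mathbf z}$ a.s., where $\|\mathbf X\|_{\mathrm{TV}}=\sup\sum_i\|\mathbf X_{t_{i+1}}-\mathbf X_{t_i}\|$ over partitions of $[0,T]$. Logistic loss $\ell(y,\eta)=-y\eta+\log(1+e^\eta)$. $\mathcal R^*$ = minimal population risk $\min\mathbb E[\ell(y,G(\mathbf X)+\mathbf z^\top\boldsymbol\gamma')]$ over continuous $G$ with $\|G\|_\infty\le C_F$, $\|\boldsymbol\gamma'\|_1\le C_{\boldsymbol\gamma}$. (A.4): $\mathcal R^*\le\inf_{p,\boldsymbol\theta_p}\mathcal R_p(\boldsymbol\theta_p)$. Time augmentation $\widetilde{\mathbf X}(t)=(\mathbf X(t),t)\in\mathbb R^d$; signature terms $S^I(\widetilde{\mathbf X})=\int_{0<t_1<\dots<t_k<T}d\widetilde X^{i_1}_{t_1}\cdots d\widetilde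 X^{i_k}_{t_k}$ ($I\in\{1,..,d\}^k$, empty $I$ gives 1); truncated signature $S_p(\widetilde{\mathbf X})=(S^I)_{|I|\le p}\in\mathbb R^{s_d(p)}$, $s_d(p)=\sum_{k=0}^pd^k$; $\widetilde{\mathbf S}_p(\widetilde{\mathbf X},\mathbf z)=(S_p(\widetilde{\mathbf X})^\top,\mathbf z^\top)^\top$; $\mathcal R_p(\boldsymbol\theta_p)=\mathbb E[\ell(y,\widetilde{\mathbf S}_p^\top\boldsymbol\theta_p)]$; $B_{p,r}=\{\boldsymbol\theta\in\mathbb R^{s_d(p)+q}:\|\boldsymbol\theta\|_1\le r\}$. Data: $(\mathbf X_i,\mathbf z_i,y_i)_{i=1}^n$ i.i.d. copies. $\widehat{\mathcal R}_{p,n}(\boldsymbol\theta_p)=\frac1n\sum_i\ell(y_i,\widetilde{\mathbf S}_p(\widetilde{\mathbf X}_i,\mathbf z_i)^\top\boldsymbol\theta_p)$; $\widehat{\boldsymbol\theta}_p=\arg\min_{B_{p,r}}\widehat{\mathcal R}_{p,n}$; $\widehat L_n(p)=\widehat{\mathcal R}_{p,n}(\widehat{\boldsymbol\theta}_p)$. Penalty $\mathrm{pen}_n(p,q)=C_{\mathrm{pen}}\sqrt{s_d(p)e^q}/n^\rho$ with constant $C_{\mathrm{pen}}>0$. $\widehat p=\min\{\arg\min_{p\in\mathbb N}(\widehat L_n(p)+\mathrm{pen}_n(p,q))\}$. *)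

theory Defs
  imports "HOL-Probability.Probability"
begin

text \<open>Paths in R^(d-1) are encoded as functions real => nat => real; only the
coordinates i < d-1 and times in [0,T] are meaningful.  Vectors in R^q are
functions nat => real, only coordinates j < q are meaningful.\<close>

type_synonym path = "real \<Rightarrow> nat \<Rightarrow> real"

definition vnorm :: "nat \<Rightarrow> (nat \<Rightarrow> real) \<Rightarrow> real" where
  "vnorm k v = sqrt (\<Sum>i<k. (v i)\<^sup>2)"

definition partition_of :: "real \<Rightarrow> real \<Rightarrow> nat \<Rightarrow> (nat \<Rightarrow> real) \<Rightarrow> bool" where
  "partition_of a b m t \<longleftrightarrow> t 0 = a \<and> t m = b \<and> (\<forall>i<m. t i \<le> t (Suc i))"

definition tv :: "nat \<Rightarrow> real \<Rightarrow> path \<Rightarrow> ereal" where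
  "tv d T X = (SUP mt \<in> {(m, t). partition_of 0 T m t}.
      ereal (\<Sum>i<fst mt. vnorm (d - 1) (\<lambda>k. X (snd mt (Suc i)) k - X (snd mt i) k)))"

definition tagged_partition :: "real \<Rightarrow> real \<Rightarrow> nat \<Rightarrow> (nat \<Rightarrow> real) \<Rightarrow> (nat \<Rightarrow> real) \<Rightarrow> bool" where
  "tagged_partition a b m t \<xi> \<longleftrightarrow> t 0 = a \<and> t m = b \<and>
     (\<forall>i<m. t i < t (Suc i) \<and> t i \<le> \<xi> i \<and> \<xi> i \<le> t (Suc i))"

definition rs_sum :: "(real \<Rightarrow> real) \<Rightarrow> (real \<Rightarrow> real) \<Rightarrow> nat \<Rightarrow> (nat \<Rightarrow> real) \<Rightarrow> (nat \<Rightarrow> real) \<Rightarrow> real" where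
  "rs_sum f g m t \<xi> = (\<Sum>i<m. f (\<xi> i) * (g (t (Suc i)) - g (t i)))"

definition has_rs_integral :: "(real \<Rightarrow> real) \<Rightarrow> (real \<Rightarrow> real) \<Rightarrow> real \<Rightarrow> real \<Rightarrow> real \<Rightarrow> bool" where
  "has_rs_integral f g a b L \<longleftrightarrow> (\<forall>\<epsilon>>0. \<exists>\<delta>>0. \<forall>m t \<xi>.
      tagged_partition a b m t \<xi> \<and> (\<forall>i<m. t (Suc i) - t i < \<delta>) \<longrightarrow> \<bar>rs_sum f g m t \<xi> - L\<bar> < \<epsilon>)"

definition rs_integral :: "(real \<Rightarrow> real) \<Rightarrow> (real \<Rightarrow> real) \<Rightarrow> real \<Rightarrow> real \<Rightarrow> real" where
  "rs_integral f g a b = (THE L. has_rs_integral f g a b L)"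

text \<open>Time augmentation: coordinates 0..d-2 are those of X, coordinate d-1 is time.
(Coordinates are 0-based: index i here corresponds to index i+1 in the paper.)\<close>
definition time_aug :: "nat \<Rightarrow> path \<Rightarrow> path" where
  "time_aug d X = (\<lambda>t i. if i < d - 1 then X t i else t)"

text \<open>Iterated integrals, with the multi-index given in reversed order:
sig_rev Y (i # J) t = integral from 0 to t of sig_rev Y J s dY^i(s).\<close>
fun sig_rev :: "path \<Rightarrow> nat list \<Rightarrow> real \<Rightarrow> real" where
  "sig_rev Y [] t = 1"
| "sig_rev Y (i # J) t = rs_integral (sig_rev Y J) (\<lambda>s. Y s i) 0 t"

text \<open>Signature term S^I over [0,T], I = (i_1,...,i_k):
 integral over 0<t_1<...<t_k<T of dY^{i_1}_{t_1} ... dY^{i_k}_{t_k}.\<close>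
definition sig_term :: "real \<Rightarrow> path \<Rightarrow> nat list \<Rightarrow> real" where
  "sig_term T Y I = sig_rev Y (rev I) T"

definition sd :: "nat \<Rightarrow> nat \<Rightarrow> nat" where
  "sd d p = (\<Sum>k\<le>p. d ^ k)"

text \<open>Index set of the extended truncated signature vector: multi-indices of length
at most p over {0..d-1} (signature coordinates), and 0..q-1 (coordinates of z).
It has s_d(p) + q elements.\<close>
definition idx :: "nat \<Rightarrow> nat \<Rightarrow> nat \<Rightarrow> (nat list + nat) set" where
  "idx d p q = Inl ` {I. length I \<le> p \<and> set I \<subseteq> {..<d}} \<union> Inr ` {..<q}"

text \<open>The coefficient space R^(s_d(p)+q), as functions supported on idx d p q.\<close>
definition coef_space :: "nat \<Rightarrow> nat \<Rightarrow> nat \<Rightarrow> (nat list + nat \<Rightarrow> real) set" where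
  "coef_space d p q = {\<theta>. \<forall>x. x \<notin> idx d p q \<longrightarrow> \<theta> x = 0}"

definition ball1 :: "nat \<Rightarrow> nat \<Rightarrow> nat \<Rightarrow> real \<Rightarrow> (nat list + nat \<Rightarrow> real) set" where
  "ball1 d p q r = {\<theta> \<in> coef_space d p q. (\<Sum>x\<in>idx d p q. \<bar>\<theta> x\<bar>) \<le> r}"

definition feature :: "nat \<Rightarrow> real \<Rightarrow> path \<Rightarrow> (nat \<Rightarrow> real) \<Rightarrow> nat list + nat \<Rightarrow> real" where
  "feature d T X z x = (case x of Inl I \<Rightarrow> sig_term T (time_aug d X) I | Inr j \<Rightarrow> z j)"

definition lin_pred :: "nat \<Rightarrow> real \<Rightarrow> nat \<Rightarrow> nat \<Rightarrow> (nat list + nat \<Rightarrow> real) \<Rightarrow> path \<Rightarrow> (nat \<Rightarrow> real) \<Rightarrow> real" where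
  "lin_pred d T p q \<theta> X z = (\<Sum>x\<in>idx d p q. \<theta> x * feature d T X z x)"

definition logloss :: "real \<Rightarrow> real \<Rightarrow> real" where
  "logloss y \<eta> = - y * \<eta> + ln (1 + exp \<eta>)"

definition sigmoid :: "real \<Rightarrow> real" where
  "sigmoid u = exp u / (1 + exp u)"

definition path_dom :: "nat \<Rightarrow> real \<Rightarrow> (nat \<Rightarrow> real) \<Rightarrow> path set" where
  "path_dom d T x0 = {X. (\<forall>i<d - 1. continuous_on {0..T} (\<lambda>t. X t i)) \<and>
      (\<forall>i<d - 1. X 0 i = x0 i) \<and> tv d T X < \<infinity>}"

definition cont_functional :: "nat \<Rightarrow> real \<Rightarrow> (nat \<Rightarrow> real) \<Rightarrow> (path \<Rightarrow> real) \<Rightarrow> bool" where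
  "cont_functional d T x0 G \<longleftrightarrow> (\<forall>X\<in>path_dom d T x0. \<forall>\<epsilon>>0. \<exists>\<delta>>0. \<forall>Y\<in>path_dom d T x0.
      tv d T (\<lambda>t i. Y t i - X t i) < ereal \<delta> \<longrightarrow> \<bar>G Y - G X\<bar> < \<epsilon>)"

definition vec_space :: "(nat \<Rightarrow> real) measure" where
  "vec_space = Pi\<^sub>M UNIV (\<lambda>_. borel)"

definition path_space :: "path measure" where
  "path_space = Pi\<^sub>M UNIV (\<lambda>_. vec_space)"

definition triple_space :: "((path \<times> (nat \<Rightarrow> real)) \<times> real) measure" where
  "triple_space = (path_space \<Otimes>\<^sub>M vec_space) \<Otimes>\<^sub>M borel"

definition risk :: "'w measure \<Rightarrow> ('w \<Rightarrow> path) \<Rightarrow> ('w \<Rightarrow> nat \<Rightarrow> real) \<Rightarrow> ('w \<Rightarrow> real)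
    \<Rightarrow> nat \<Rightarrow> real \<Rightarrow> nat \<Rightarrow> nat \<Rightarrow> (nat list + nat \<Rightarrow> real) \<Rightarrow> real" where
  "risk M X z y d T q p \<theta> = (\<integral>\<omega>. logloss (y \<omega>) (lin_pred d T p q \<theta> (X \<omega>) (z \<omega>)) \<partial>M)"

definition emp_risk :: "(nat \<Rightarrow> 'w \<Rightarrow> path) \<Rightarrow> (nat \<Rightarrow> 'w \<Rightarrow> nat \<Rightarrow> real) \<Rightarrow> (nat \<Rightarrow> 'w \<Rightarrow> real)
    \<Rightarrow> nat \<Rightarrow> real \<Rightarrow> nat \<Rightarrow> nat \<Rightarrow> nat \<Rightarrow> (nat list + nat \<Rightarrow> real) \<Rightarrow> 'w \<Rightarrow> real" where
  "emp_risk Xs zs ys d T q n p \<theta> \<omega> =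
     (1 / real n) * (\<Sum>i<n. logloss (ys i \<omega>) (lin_pred d T p q \<theta> (Xs i \<omega>) (zs i \<omega>)))"

definition emp_L :: "(nat \<Rightarrow> 'w \<Rightarrow> path) \<Rightarrow> (nat \<Rightarrow> 'w \<Rightarrow> nat \<Rightarrow> real) \<Rightarrow> (nat \<Rightarrow> 'w \<Rightarrow> real)
    \<Rightarrow> nat \<Rightarrow> real \<Rightarrow> nat \<Rightarrow> real \<Rightarrow> nat \<Rightarrow> nat \<Rightarrow> 'w \<Rightarrow> real" where
  "emp_L Xs zs ys d T q r n p \<omega> = (INF \<theta>\<in>ball1 d p q r. emp_risk Xs zs ys d T q n p \<theta> \<omega>)"

definition pen :: "real \<Rightarrow> real \<Rightarrow> nat \<Rightarrow> nat \<Rightarrow> nat \<Rightarrow> nat \<Rightarrow> real" where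
  "pen Cpen \<rho> d n p q = Cpen * sqrt (real (sd d p) * exp (real q)) / (real n powr \<rho>)"

definition p_hat :: "(nat \<Rightarrow> 'w \<Rightarrow> path) \<Rightarrow> (nat \<Rightarrow> 'w \<Rightarrow> nat \<Rightarrow> real) \<Rightarrow> (nat \<Rightarrow> 'w \<Rightarrow> real)
    \<Rightarrow> nat \<Rightarrow> real \<Rightarrow> nat \<Rightarrow> real \<Rightarrow> real \<Rightarrow> real \<Rightarrow> nat \<Rightarrow> 'w \<Rightarrow> nat" where
  "p_hat Xs zs ys d T q r Cpen \<rho> n \<omega> =
     (LEAST p. \<forall>p'. emp_L Xs zs ys d T q r n p \<omega> + pen Cpen \<rho> d n p q
                     \<le> emp_L Xs zs ys d T q r n p' \<omega> + pen Cpen \<rho> d n p' q)"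

end

theory Submission
  imports Defs
begin

definition clamp :: "real \<Rightarrow> real \<Rightarrow> real" where "clamp T s = max 0 (min s T)"

lemma clamp_in: "0 \<le> T \<Longrightarrow> clamp T s \<in> {0..T}"
  by (auto simp: clamp_def)
lemma clamp_id: "s \<in> {0..T} \<Longrightarrow> clamp T s = s"
  by (auto simp: clamp_def)
lemma clamp_mono: "x \<le> y \<Longrightarrow> clamp T x \<le> clamp T y"
  by (auto simp: clamp_def)
lemma continuous_clamp: "continuous_on UNIV (clamp T)"
  unfolding clamp_def by (intro continuous_intros)
lemma cont_comp_clamp:
  assumes "0 \<le> T" "continuous_on {0..T} f"
  shows "continuous_on UNIV (\<lambda>s. f (clamp T s))"
  by (rule continuous_on_compose2[OF assms(2) continuous_clamp]) (use clamp_in assms(1) in auto)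

lemma tp_chain:
  fixes t :: "nat \<Rightarrow> real"
  assumes "\<forall>i<m. t i \<le> t (Suc i)" "i \<le> j" "j \<le> m"
  shows "t i \<le> t j"
  using assms
proof (induction j)
  case 0 then show ?case by simp
next
  case (Suc j)
  show ?case
  proof (cases "i = Suc j")
    case True then show ?thesis by simp
  next
    case False
    then have "t i \<le> t j" using Suc by simp
    also have "t j \<le> t (Suc j)" using Suc by simp
    finally show ?thesis .
  qed
qed

lemma rs_unique:
  assumes "has_rs_integral f g a b L1" "has_rs_integral f g a b L2" "a \<le> b"
  shows "L1 = L2"
proof (cases "a = b")
  case True
  have "\<bar>L\<bar> < e" if hL: "has_rs_integral f g a b L" and he: "e > 0" for L e
  proof -
    obtain \<delta> where "\<delta> > 0" and H: "\<forall>m t \<xi>. tagged_partition a b m t \<xi> \<and> (\<forall>i<m. t (Suc i) - t i < \<delta>)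
       \<longrightarrow> \<bar>rs_sum f g m t \<xi> - L\<bar> < e"
      using hL he unfolding has_rs_integral_def by blast
    have "tagged_partition a b 0 (\<lambda>_. a) (\<lambda>_. a)" using True by (simp add: tagged_partition_def)
    then show ?thesis using H[rule_format, of 0 "\<lambda>_. a" "\<lambda>_. a"] by (simp add: rs_sum_def)
  qed
  have z: "L = 0" if hL: "has_rs_integral f g a b L" for L
  proof (rule ccontr)
    assume "L \<noteq> 0"
    then have "\<bar>L\<bar> < \<bar>L\<bar>" using \<open>\<And>L e. has_rs_integral f g a b L \<Longrightarrow> 0 < e \<Longrightarrow> \<bar>L\<bar> < e\<close>[OF hL, of "\<bar>L\<bar>"] by simp
    then show False by simp
  qed
  have "L1 = 0" "L2 = 0" using z assms by auto
  then show ?thesis by simp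
next
  case False
  then have ab: "a < b" using assms by simp
  show ?thesis
  proof (rule ccontr)
    assume ne: "L1 \<noteq> L2"
    define e where "e = \<bar>L1 - L2\<bar> / 2"
    have e: "e > 0" using ne by (simp add: e_def)
    obtain \<delta>1 where "\<delta>1 > 0" and H1: "\<forall>m t \<xi>. tagged_partition a b m t \<xi> \<and> (\<forall>i<m. t (Suc i) - t i < \<delta>1)
       \<longrightarrow> \<bar>rs_sum f g m t \<xi> - L1\<bar> < e"
      using assms(1) e unfolding has_rs_integral_def by blast
    obtain \<delta>2 where "\<delta>2 > 0" and H2: "\<forall>m t \<xi>. tagged_partition a b m t \<xi> \<and> (\<forall>i<m. t (Suc i) - t i < \<delta>2)
       \<longrightarrow> \<bar>rs_sum f g m t \<xi> - L2\<bar> < e"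
      using assms(2) e unfolding has_rs_integral_def by blast
    obtain N :: nat where N: "N > (b - a) / min \<delta>1 \<delta>2"
      using reals_Archimedean2 by blast
    have Npos: "N > 0"
    proof -
      have "(b - a) / min \<delta>1 \<delta>2 > 0" using ab \<open>\<delta>1 > 0\<close> \<open>\<delta>2 > 0\<close> by simp
      then show ?thesis using N by linarith
    qed
    define t where "t j = a + (b - a) * real j / real N" for j
    have tp: "tagged_partition a b N t t"
      unfolding tagged_partition_def t_def using Npos ab
      by (auto simp: field_simps)
    have mpos: "min \<delta>1 \<delta>2 > 0" using \<open>\<delta>1 > 0\<close> \<open>\<delta>2 > 0\<close> by simp
    have "b - a < real N * min \<delta>1 \<delta>2" using N mpos by (simp add: pos_divide_less_eq)
    then have A: "b - a < real N * \<delta>1" "b - a < real N * \<delta>2"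
      using mult_left_mono[of "min \<delta>1 \<delta>2" \<delta>1 "real N"] mult_left_mono[of "min \<delta>1 \<delta>2" \<delta>2 "real N"] by auto
    then have mesh: "(b - a) / N < \<delta>1" "(b - a) / N < \<delta>2" using Npos by (auto simp: divide_less_eq mult.commute)
    have "t (Suc i) - t i = (b - a) / N" for i
      unfolding t_def using Npos by (simp add: field_simps)
    then have m1: "\<forall>i<N. t (Suc i) - t i < \<delta>1" and m2: "\<forall>i<N. t (Suc i) - t i < \<delta>2"
      using mesh by auto
    have "\<bar>rs_sum f g N t t - L1\<bar> < e" using H1 tp m1 by blast
    moreover have "\<bar>rs_sum f g N t t - L2\<bar> < e" using H2 tp m2 by blast
    ultimately have "\<bar>L1 - L2\<bar> < 2 * e" by linarith
    then show False by (simp add: e_def)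
  qed
qed

lemma rs_integral_eq:
  assumes "has_rs_integral f g a b L" "a \<le> b"
  shows "rs_integral f g a b = L"
  unfolding rs_integral_def using assms rs_unique by blast

lemma rs_left_tendsto:
  assumes "has_rs_integral f g 0 t L" "0 \<le> t"
  shows "(\<lambda>N. \<Sum>j<N. f (t * real j / real N) * (g (t * real (Suc j) / real N) - g (t * real j / real N)))
           \<longlonglongrightarrow> L"
proof (cases "t = 0")
  case True
  have "has_rs_integral f g 0 t 0"
    unfolding has_rs_integral_def
  proof (intro allI impI)
    fix e :: real assume "e > 0"
    show "\<exists>\<delta>>0. \<forall>m ta \<xi>. tagged_partition 0 t m ta \<xi> \<and> (\<forall>i<m. ta (Suc i) - ta i < \<delta>) \<longrightarrow>
               \<bar>rs_sum f g m ta \<xi> - 0\<bar> < e"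
    proof (intro exI[of _ 1] conjI allI impI)
      fix m ta \<xi> assume H: "tagged_partition 0 t m ta \<xi> \<and> (\<forall>i<m. ta (Suc i) - ta i < 1)"
      have "m = 0"
      proof (rule ccontr)
        assume "m \<noteq> 0"
        have "\<forall>i<m. ta i \<le> ta (Suc i)" using H by (auto simp: tagged_partition_def less_imp_le)
        then have "ta 1 \<le> ta m" using tp_chain[of m ta 1 m] \<open>m \<noteq> 0\<close> by simp
        moreover have "ta 0 < ta 1" using H \<open>m \<noteq> 0\<close> by (auto simp: tagged_partition_def)
        ultimately show False using H True by (auto simp: tagged_partition_def)
      qed
      then show "\<bar>rs_sum f g m ta \<xi> - 0\<bar> < e" using \<open>e > 0\<close> by (simp add: rs_sum_def)
    qed simp
  qed
  then have "L = 0" using rs_unique assms by (metis order_refl True)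
  then show ?thesis using True by simp
next
  case False
  then have tpos: "t > 0" using assms by simp
  show ?thesis
  proof (rule LIMSEQ_I)
    fix e :: real assume "e > 0"
    obtain \<delta> where "\<delta> > 0" and H: "\<forall>m ta \<xi>. tagged_partition 0 t m ta \<xi> \<and> (\<forall>i<m. ta (Suc i) - ta i < \<delta>)
       \<longrightarrow> \<bar>rs_sum f g m ta \<xi> - L\<bar> < e"
      using assms(1) \<open>e > 0\<close> unfolding has_rs_integral_def by blast
    obtain N0 :: nat where N0: "N0 > t / \<delta>" using reals_Archimedean2 by blast
    show "\<exists>no. \<forall>N\<ge>no. norm ((\<Sum>j<N. f (t * real j / real N) * (g (t * real (Suc j) / real N) - g (t * real j / real N))) - L) < e"
    proof (intro exI[of _ N0] allI impI)
      fix N assume "N \<ge> N0"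
      have "t / \<delta> > 0" using tpos \<open>\<delta> > 0\<close> by simp
      then have Npos: "N > 0" using N0 \<open>N \<ge> N0\<close> by linarith
      have "real N > t / \<delta>" using N0 \<open>N \<ge> N0\<close> by linarith
      then have mesh: "t / N < \<delta>" using Npos \<open>\<delta> > 0\<close> by (simp add: field_simps)
      define ta where "ta j = t * real j / real N" for j
      have tp: "tagged_partition 0 t N ta ta"
        unfolding tagged_partition_def ta_def using Npos tpos by (auto simp: field_simps)
      have "ta (Suc i) - ta i = t / N" for i unfolding ta_def using Npos by (simp add: field_simps)
      then have "\<forall>i<N. ta (Suc i) - ta i < \<delta>" using mesh by simp
      then have "\<bar>rs_sum f g N ta ta - L\<bar> < e" using H tp by blast
      then show "norm ((\<Sum>j<N. f (t * real j / real N) * (g (t * real (Suc j) / real N) - g (t * real j / real N))) - L) < e"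
        by (simp add: rs_sum_def ta_def)
    qed
  qed
qed


lemma rs_exists:
  fixes f g G :: "real \<Rightarrow> real" and T :: real
  assumes T: "0 \<le> T" and cf: "continuous_on {0..T} f" and cg: "continuous_on {0..T} g"
    and dom: "\<And>a b. 0 \<le> a \<Longrightarrow> a \<le> b \<Longrightarrow> b \<le> T \<Longrightarrow> \<bar>g b - g a\<bar> \<le> G b - G a"
  shows "\<exists>I. (\<forall>t\<in>{0..T}. has_rs_integral f g 0 t (I t)) \<and> continuous_on {0..T} I"
proof -
  define fc where "fc s = f (clamp T s)" for s
  define gc where "gc s = g (clamp T s)" for s
  define Gc where "Gc s = G (clamp T s)" for s
  have gc_dom: "\<bar>gc y - gc x\<bar> \<le> Gc y - Gc x" if "x \<le> y" for x y
    unfolding gc_def Gc_def using dom[of "clamp T x" "clamp T y"] clamp_in[OF T] clamp_mono[OF that] by auto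
  have Gc_mono: "Gc x \<le> Gc y" if "x \<le> y" for x y
    using gc_dom[OF that] by linarith
  have gcc: "continuous_on UNIV gc" unfolding gc_def by (rule cont_comp_clamp[OF T cg])
  have fcc: "continuous_on UNIV fc" unfolding fc_def by (rule cont_comp_clamp[OF T cf])
  have fc_eq: "s \<in> {0..T} \<Longrightarrow> fc s = f s" for s by (simp add: fc_def clamp_id)
  have gc_eq: "s \<in> {0..T} \<Longrightarrow> gc s = g s" for s by (simp add: gc_def clamp_id)
  obtain Bf where Bf: "\<And>s. \<bar>fc s\<bar> \<le> Bf"
  proof -
    have "compact (f ` {0..T})" by (rule compact_continuous_image[OF cf]) simp
    then obtain B where "\<forall>x\<in>f ` {0..T}. norm x \<le> B" using compact_imp_bounded bounded_iff by metis
    then show ?thesis using that[of B] clamp_in[OF T] unfolding fc_def by auto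
  qed
  have fcm: "fc \<in> borel_measurable borel" using fcc by (rule borel_measurable_continuous_onI)
  define F where "F t = Inf (Gc ` {t<..})" for t
  have bdd: "bdd_below (Gc ` {t<..})" for t
    by (rule bdd_belowI2[of _ "Gc t"]) (auto intro: Gc_mono)
  have F_le: "F t \<le> Gc s" if "t < s" for t s
    unfolding F_def using that by (intro cInf_lower bdd) auto
  have F_ge: "Gc t \<le> F t" for t
    unfolding F_def by (rule cInf_greatest) (auto intro: Gc_mono)
  have F_mono: "F x \<le> F y" if "x \<le> y" for x y
    unfolding F_def[of y] by (rule cInf_greatest) (use that F_le in auto)
  have F_rc: "continuous (at_right a) F" for a
  proof -
  have "\<forall>e>0. \<exists>d>0. F (a + d) - F a < e"
  proof (intro allI impI)
    fix e :: real assume "e > 0"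
    have "Inf (Gc ` {a<..}) < F a + e" using \<open>e > 0\<close> by (simp add: F_def)
    then obtain s where s: "s > a" "Gc s < F a + e"
      by (subst (asm) cInf_less_iff) (auto simp: bdd)
    show "\<exists>d>0. F (a + d) - F a < e"
    proof (intro exI[of _ "(s - a) / 2"] conjI)
      have "a + (s - a) / 2 < s" using s by (simp add: field_simps)
      then show "F (a + (s - a) / 2) - F a < e" using s F_le[of "a + (s - a) / 2" s] by linarith
    qed (use s in simp)
  qed
  then show ?thesis using continuous_at_right_real_increasing[of F a] F_mono by blast
  qed
  have F_dom: "\<bar>gc y - gc x\<bar> \<le> F y - F x" if "x \<le> y" for x y
  proof (cases "x = y")
    case True then show ?thesis by simp
  next
    case False
    then have xy: "x < y" using that by simp
    have lim: "((\<lambda>u. \<bar>gc y - gc u\<bar>) \<longlongrightarrow> \<bar>gc y - gc x\<bar>) (at_right x)"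
    proof -
      have "isCont gc x" using gcc by (simp add: continuous_on_eq_continuous_at)
      then have "(gc \<longlongrightarrow> gc x) (at_right x)"
        by (simp add: continuous_at_imp_continuous_at_within isCont_def filterlim_at_split)
      then show ?thesis by (intro tendsto_intros)
    qed
    have ev: "eventually (\<lambda>u. \<bar>gc y - gc u\<bar> \<le> F y - F x) (at_right x)"
    proof -
      have "eventually (\<lambda>u. u < y) (at_right x)" using xy eventually_at_right_field by blast
      moreover have "eventually (\<lambda>u. x < u) (at_right x)" by (simp add: eventually_at_right_less)
      ultimately show ?thesis
      proof eventually_elim
        case (elim u)
        have "\<bar>gc y - gc u\<bar> \<le> Gc y - Gc u" using gc_dom[of u y] elim by simp
        also have "\<dots> \<le> F y - F x" using F_ge[of y] F_le[of x u] elim by simp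
        finally show ?case .
      qed
    qed
    show ?thesis by (rule tendsto_upperbound[OF lim ev]) simp
  qed
  define F2 where "F2 t = F t - gc t" for t
  have F2_mono: "F2 x \<le> F2 y" if "x \<le> y" for x y
    using F_dom[OF that] unfolding F2_def by linarith
  have F2_rc: "continuous (at_right a) F2" for a
  proof -
    have "isCont gc a" using gcc by (simp add: continuous_on_eq_continuous_at)
    then have "continuous (at_right a) gc" by (simp add: continuous_at_imp_continuous_at_within)
    then show ?thesis unfolding F2_def using F_rc[of a] by (intro continuous_intros)
  qed
  define \<mu>1 where "\<mu>1 = interval_measure F"
  define \<mu>2 where "\<mu>2 = interval_measure F2"
  have meas1: "measure \<mu>1 {a<..b} = F b - F a" if "a \<le> b" for a b
    unfolding \<mu>1_def using measure_interval_measure_Ioc[OF that F_mono F_rc] by blast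
  have meas2: "measure \<mu>2 {a<..b} = F2 b - F2 a" if "a \<le> b" for a b
    unfolding \<mu>2_def using measure_interval_measure_Ioc[OF that F2_mono F2_rc] by blast
  have em1: "emeasure \<mu>1 {a<..b} < \<infinity>" for a b
  proof (cases "a \<le> b")
    case True
    have "emeasure (interval_measure F) {a<..b} = ennreal (F b - F a)"
      by (rule emeasure_interval_measure_Ioc[OF True]) (auto intro: F_mono F_rc)
    then show ?thesis unfolding \<mu>1_def by simp
  qed simp
  have em2: "emeasure \<mu>2 {a<..b} < \<infinity>" for a b
  proof (cases "a \<le> b")
    case True
    have "emeasure (interval_measure F2) {a<..b} = ennreal (F2 b - F2 a)"
      by (rule emeasure_interval_measure_Ioc[OF True]) (auto intro: F2_mono F2_rc)
    then show ?thesis unfolding \<mu>2_def by simp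
  qed simp
  have sets1[simp]: "sets \<mu>1 = sets borel" and sets2[simp]: "sets \<mu>2 = sets borel"
    by (simp_all add: \<mu>1_def \<mu>2_def)
  have space1[simp]: "space \<mu>1 = UNIV" and space2[simp]: "space \<mu>2 = UNIV"
    by (simp_all add: \<mu>1_def \<mu>2_def)
  define Jk where "Jk \<mu> a b h = (\<integral>s. indicator {a<..b} s * h s \<partial>\<mu>)" for \<mu> :: "real measure" and a b :: real and h :: "real \<Rightarrow> real"
  have int: "integrable \<mu> (\<lambda>s. indicator {a<..b} s * h s)"
    if "\<mu> = \<mu>1 \<or> \<mu> = \<mu>2" "h \<in> borel_measurable borel" "\<And>s. \<bar>h s\<bar> \<le> K" for \<mu> a b and h :: "real \<Rightarrow> real" and K :: real
  proof -
    have s: "sets \<mu> = sets borel" using that(1) by auto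
    have e: "emeasure \<mu> {a<..b} < \<infinity>" using that(1) em1 em2 by blast
    have m: "h \<in> borel_measurable \<mu>" using that(2) measurable_cong_sets[OF s refl] by blast
    have A: "{a<..b} \<in> sets \<mu>" using s by simp
    have mm: "(\<lambda>x. indicator {a<..b} x * h x) \<in> borel_measurable \<mu>"
      by (intro borel_measurable_times borel_measurable_indicator A m)
    show ?thesis
      by (rule integrableI_bounded_set[where A="{a<..b}" and B=K, OF A mm e])
         (use that(3) in \<open>auto split: split_indicator\<close>)
  qed
  have Jk_add: "Jk \<mu> a c h = Jk \<mu> a b h + Jk \<mu> b c h"
    if "\<mu> = \<mu>1 \<or> \<mu> = \<mu>2" "h \<in> borel_measurable borel" "\<And>s. \<bar>h s\<bar> \<le> K" "a \<le> b" "b \<le> c" for \<mu> a b c and h :: "real \<Rightarrow> real" and K :: real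
  proof -
    have "(\<lambda>s. indicator {a<..c} s * h s) = (\<lambda>s. indicator {a<..b} s * h s + indicator {b<..c} s * h s)"
      using that(4,5) by (auto simp: fun_eq_iff split: split_indicator)
    then show ?thesis unfolding Jk_def
      using int[OF that(1-3), of a b] int[OF that(1-3), of b c] by (simp add: integral_add)
  qed
  have Jk_const: "Jk \<mu> a b (\<lambda>_. c) = c * measure \<mu> {a<..b}" if "\<mu> = \<mu>1 \<or> \<mu> = \<mu>2" for \<mu> a b and c :: real
  proof -
    have "Jk \<mu> a b (\<lambda>_. c) = (\<integral>s. c * indicator {a<..b} s \<partial>\<mu>)" unfolding Jk_def by (simp add: mult.commute)
    also have "\<dots> = c * measure \<mu> {a<..b}" using that by auto
    finally show ?thesis .
  qed
  have Jk_bound: "\<bar>Jk \<mu> a b h\<bar> \<le> e * measure \<mu> {a<..b}"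
    if "\<mu> = \<mu>1 \<or> \<mu> = \<mu>2" "h \<in> borel_measurable borel" "\<And>s. \<bar>h s\<bar> \<le> K"
       "\<And>s. s \<in> {a<..b} \<Longrightarrow> \<bar>h s\<bar> \<le> e" for \<mu> a b and h :: "real \<Rightarrow> real" and K e :: real
  proof -
    have "\<bar>Jk \<mu> a b h\<bar> \<le> (\<integral>s. indicator {a<..b} s * e \<partial>\<mu>)"
      unfolding Jk_def
    proof (rule integral_abs_bound_integral)
      show "integrable \<mu> (\<lambda>s. indicator {a<..b} s * h s)" by (rule int[OF that(1-3)])
      show "integrable \<mu> (\<lambda>s. indicator {a<..b} s * e)"
        by (rule int[OF that(1), of "\<lambda>_. e" "\<bar>e\<bar>"]) auto
      show "\<bar>indicator {a<..b} s * h s\<bar> \<le> indicator {a<..b} s * e" for s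
        using that(4)[of s] by (auto split: split_indicator)
    qed
    also have "\<dots> = e * measure \<mu> {a<..b}" using Jk_const[OF that(1), of a b e] unfolding Jk_def .
    finally show ?thesis .
  qed
  define J where "J a b = Jk \<mu>1 a b fc - Jk \<mu>2 a b fc" for a b
  have J_add: "J a c = J a b + J b c" if "a \<le> b" "b \<le> c" for a b c
    unfolding J_def using Jk_add[OF _ fcm Bf that] by simp
  have J_refl: "J a a = 0" for a by (simp add: J_def Jk_def)
  have piece: "\<bar>fc \<xi> * (gc b - gc a) - J a b\<bar> \<le> e * ((F b - F a) + (F2 b - F2 a))"
    if ab: "a \<le> b" and close: "\<And>s. s \<in> {a<..b} \<Longrightarrow> \<bar>fc \<xi> - fc s\<bar> \<le> e" for a b \<xi> e
  proof -
    have hm: "(\<lambda>s. fc \<xi> - fc s) \<in> borel_measurable borel" using fcm by simp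
    have hb: "\<bar>fc \<xi> - fc s\<bar> \<le> 2 * Bf" for s using Bf[of \<xi>] Bf[of s] by linarith
    have eq: "fc \<xi> * (gc b - gc a) = Jk \<mu>1 a b (\<lambda>_. fc \<xi>) - Jk \<mu>2 a b (\<lambda>_. fc \<xi>)"
      using Jk_const[of \<mu>1 a b "fc \<xi>"] Jk_const[of \<mu>2 a b "fc \<xi>"] meas1[OF ab] meas2[OF ab]
      by (simp add: F2_def algebra_simps)
    have d1: "Jk \<mu>1 a b (\<lambda>_. fc \<xi>) - Jk \<mu>1 a b fc = Jk \<mu>1 a b (\<lambda>s. fc \<xi> - fc s)"
      unfolding Jk_def using int[of \<mu>1 "\<lambda>_. fc \<xi>" "\<bar>fc \<xi>\<bar>" a b] int[of \<mu>1 fc Bf a b] fcm Bf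
      by (simp add: right_diff_distrib integral_diff)
    have d2: "Jk \<mu>2 a b (\<lambda>_. fc \<xi>) - Jk \<mu>2 a b fc = Jk \<mu>2 a b (\<lambda>s. fc \<xi> - fc s)"
      unfolding Jk_def using int[of \<mu>2 "\<lambda>_. fc \<xi>" "\<bar>fc \<xi>\<bar>" a b] int[of \<mu>2 fc Bf a b] fcm Bf
      by (simp add: right_diff_distrib integral_diff)
    have "fc \<xi> * (gc b - gc a) - J a b = Jk \<mu>1 a b (\<lambda>s. fc \<xi> - fc s) - Jk \<mu>2 a b (\<lambda>s. fc \<xi> - fc s)"
      using eq d1 d2 unfolding J_def by simp
    moreover have "\<bar>Jk \<mu>1 a b (\<lambda>s. fc \<xi> - fc s)\<bar> \<le> e * (F b - F a)"
      using Jk_bound[of \<mu>1 "\<lambda>s. fc \<xi> - fc s" "2 * Bf" a b e, OF _ hm hb close] meas1[OF ab] by simp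
    moreover have "\<bar>Jk \<mu>2 a b (\<lambda>s. fc \<xi> - fc s)\<bar> \<le> e * (F2 b - F2 a)"
      using Jk_bound[of \<mu>2 "\<lambda>s. fc \<xi> - fc s" "2 * Bf" a b e, OF _ hm hb close] meas2[OF ab] by simp
    ultimately show ?thesis by (simp add: algebra_simps)
  qed
  have part: "\<bar>(\<Sum>i<m. fc (\<xi> i) * (gc (t (Suc i)) - gc (t i))) - J (t 0) (t m)\<bar>
      \<le> e * ((F (t m) - F (t 0)) + (F2 (t m) - F2 (t 0)))"
    if "\<forall>i<m. t i \<le> t (Suc i)" "\<forall>i<m. \<forall>s\<in>{t i<..t (Suc i)}. \<bar>fc (\<xi> i) - fc s\<bar> \<le> e"
    for m and t \<xi> :: "nat \<Rightarrow> real" and e :: real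
    using that
  proof (induction m)
    case 0 show ?case using J_refl by simp
  next
    case (Suc m)
    have IH: "\<bar>(\<Sum>i<m. fc (\<xi> i) * (gc (t (Suc i)) - gc (t i))) - J (t 0) (t m)\<bar>
      \<le> e * ((F (t m) - F (t 0)) + (F2 (t m) - F2 (t 0)))" using Suc by auto
    have "t 0 \<le> t m" using tp_chain[of "Suc m" t 0 m] Suc.prems(1) by simp
    have tm: "t m \<le> t (Suc m)" using Suc.prems(1) by simp
    have step: "\<bar>fc (\<xi> m) * (gc (t (Suc m)) - gc (t m)) - J (t m) (t (Suc m))\<bar>
        \<le> e * ((F (t (Suc m)) - F (t m)) + (F2 (t (Suc m)) - F2 (t m)))"
      using piece[of "t m" "t (Suc m)" "\<xi> m" e] Suc.prems(2) tm by auto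
    have "J (t 0) (t (Suc m)) = J (t 0) (t m) + J (t m) (t (Suc m))"
      using J_add[OF \<open>t 0 \<le> t m\<close> tm] .
    then show ?case using IH step by (simp add: algebra_simps)
  qed
  define Mt where "Mt = (F T - F 0) + (F2 T - F2 0)"
  have Mt_ge: "(F t - F 0) + (F2 t - F2 0) \<le> Mt" if "t \<in> {0..T}" for t
    unfolding Mt_def using F_mono[of t T] F2_mono[of t T] that by auto
  have Mt0: "Mt \<ge> 0" using Mt_ge[of 0] T by simp
  have ucont: "uniformly_continuous_on {0..T} f"
    by (rule compact_uniformly_continuous[OF cf]) simp
  have hrs: "has_rs_integral f g 0 t (J 0 t)" if t: "t \<in> {0..T}" for t
    unfolding has_rs_integral_def
  proof (intro allI impI)
    fix \<epsilon> :: real assume "\<epsilon> > 0"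
    define e where "e = \<epsilon> / (Mt + 1)"
    have e: "e > 0" using \<open>\<epsilon> > 0\<close> Mt0 by (simp add: e_def)
    obtain \<delta> where "\<delta> > 0" and ud: "\<forall>x\<in>{0..T}. \<forall>x'\<in>{0..T}. dist x' x < \<delta> \<longrightarrow> dist (f x') (f x) < e"
      using ucont e unfolding uniformly_continuous_on_def by metis
    show "\<exists>\<delta>>0. \<forall>m ta \<xi>. tagged_partition 0 t m ta \<xi> \<and> (\<forall>i<m. ta (Suc i) - ta i < \<delta>) \<longrightarrow>
               \<bar>rs_sum f g m ta \<xi> - J 0 t\<bar> < \<epsilon>"
    proof (intro exI[of _ \<delta>] conjI allI impI)
      fix m ta \<xi> assume H: "tagged_partition 0 t m ta \<xi> \<and> (\<forall>i<m. ta (Suc i) - ta i < \<delta>)"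
      have mono: "\<forall>i<m. ta i \<le> ta (Suc i)" using H by (auto simp: tagged_partition_def less_imp_le)
      have inr: "ta i \<in> {0..t}" if "i \<le> m" for i
        using tp_chain[OF mono, of 0 i] tp_chain[OF mono, of i m] H that by (auto simp: tagged_partition_def)
      have xi: "\<xi> i \<in> {0..T}" if "i < m" for i
        using inr[of i] inr[of "Suc i"] H t that by (auto simp: tagged_partition_def)
      have closef: "\<forall>i<m. \<forall>s\<in>{ta i<..ta (Suc i)}. \<bar>fc (\<xi> i) - fc s\<bar> \<le> e"
      proof (intro allI impI ballI)
        fix i s assume i: "i < m" and s: "s \<in> {ta i<..ta (Suc i)}"
        have sT: "s \<in> {0..T}" using inr[of i] inr[of "Suc i"] i s t by auto
        have "\<xi> i \<ge> ta i" "\<xi> i \<le> ta (Suc i)" using H i by (auto simp: tagged_partition_def)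
        then have "dist s (\<xi> i) < \<delta>" using H i s by (auto simp: dist_real_def)
        then have "dist (f s) (f (\<xi> i)) < e" using ud xi[OF i] sT by blast
        then show "\<bar>fc (\<xi> i) - fc s\<bar> \<le> e" using fc_eq[OF sT] fc_eq[OF xi[OF i]]
          by (simp add: dist_real_def abs_minus_commute)
      qed
      have sumeq: "rs_sum f g m ta \<xi> = (\<Sum>i<m. fc (\<xi> i) * (gc (ta (Suc i)) - gc (ta i)))"
        unfolding rs_sum_def
      proof (intro sum.cong refl)
        fix i assume "i \<in> {..<m}"
        then have "i < m" by simp
        have "ta i \<in> {0..T}" "ta (Suc i) \<in> {0..T}" using inr[of i] inr[of "Suc i"] \<open>i < m\<close> t by auto
        then show "f (\<xi> i) * (g (ta (Suc i)) - g (ta i)) = fc (\<xi> i) * (gc (ta (Suc i)) - gc (ta i))"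
          using fc_eq[OF xi[OF \<open>i < m\<close>]] gc_eq by simp
      qed
      have ends: "ta 0 = 0" "ta m = t" using H by (auto simp: tagged_partition_def)
      have "\<bar>rs_sum f g m ta \<xi> - J 0 t\<bar> \<le> e * ((F t - F 0) + (F2 t - F2 0))"
        using part[OF mono closef] unfolding sumeq ends .
      also have "\<dots> \<le> e * Mt" using Mt_ge[OF t] e by (intro mult_left_mono) auto
      also have "\<dots> < \<epsilon>" using \<open>\<epsilon> > 0\<close> Mt0 by (simp add: e_def field_simps)
      finally show "\<bar>rs_sum f g m ta \<xi> - J 0 t\<bar> < \<epsilon>" .
    qed (use \<open>\<delta> > 0\<close> in simp)
  qed
  have Bf0: "Bf \<ge> 0" using Bf[of 0] by simp
  have Jcont: "continuous_on {0..T} (\<lambda>t. J 0 t)"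
    unfolding continuous_on_iff
  proof (intro ballI allI impI)
    fix x \<epsilon> :: real assume x: "x \<in> {0..T}" and "\<epsilon> > 0"
    define e where "e = \<epsilon> / (2 * (Mt + 1))"
    have e: "e > 0" using \<open>\<epsilon> > 0\<close> Mt0 by (simp add: e_def)
    obtain \<delta>1 where "\<delta>1 > 0" and ud: "\<forall>x\<in>{0..T}. \<forall>x'\<in>{0..T}. dist x' x < \<delta>1 \<longrightarrow> dist (f x') (f x) < e"
      using ucont e unfolding uniformly_continuous_on_def by metis
    have e2: "\<epsilon> / (2 * (Bf + 1)) > 0" using \<open>\<epsilon> > 0\<close> Bf0 by simp
    obtain \<delta>2 where "\<delta>2 > 0" and gd: "\<forall>x'\<in>{0..T}. dist x' x < \<delta>2 \<longrightarrow> dist (g x') (g x) < \<epsilon> / (2 * (Bf + 1))"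
      using cg x e2 unfolding continuous_on_iff by metis
    show "\<exists>d>0. \<forall>x'\<in>{0..T}. dist x' x < d \<longrightarrow> dist (J 0 x') (J 0 x) < \<epsilon>"
    proof (intro exI[of _ "min \<delta>1 \<delta>2"] conjI ballI impI)
      fix x' assume x': "x' \<in> {0..T}" and d: "dist x' x < min \<delta>1 \<delta>2"
      have gx: "\<bar>g x' - g x\<bar> < \<epsilon> / (2 * (Bf + 1))" using gd x' d by (simp add: dist_real_def)
      have key: "\<bar>J 0 x' - J 0 x\<bar> \<le> Bf * \<bar>g x' - g x\<bar> + e * Mt"
      proof (cases "x \<le> x'")
        case True
        have close: "\<bar>fc x - fc s\<bar> \<le> e" if "s \<in> {x<..x'}" for s
        proof -
          have sT: "s \<in> {0..T}" using that x x' by auto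
          have "dist s x < \<delta>1" using that d by (auto simp: dist_real_def)
          then have "dist (f s) (f x) < e" using ud x sT by blast
          then show ?thesis using fc_eq[OF sT] fc_eq[OF x] by (simp add: dist_real_def abs_minus_commute)
        qed
        have p: "\<bar>fc x * (gc x' - gc x) - J x x'\<bar> \<le> e * ((F x' - F x) + (F2 x' - F2 x))"
          by (rule piece[OF True close])
        have "(F x' - F x) + (F2 x' - F2 x) \<le> Mt"
          using Mt_ge[OF x'] F_mono[of 0 x] F2_mono[of 0 x] x by auto
        then have p2: "\<bar>fc x * (gc x' - gc x) - J x x'\<bar> \<le> e * Mt"
          using p e by (meson dual_order.trans less_imp_le mult_left_mono)
        have "J 0 x' = J 0 x + J x x'" using J_add[of 0 x x'] x True by auto
        moreover have "\<bar>fc x * (gc x' - gc x)\<bar> \<le> Bf * \<bar>g x' - g x\<bar>"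
          using Bf[of x] gc_eq[OF x] gc_eq[OF x'] by (simp add: abs_mult mult_right_mono)
        ultimately show ?thesis using p2 by linarith
      next
        case False
        then have le: "x' \<le> x" by simp
        have close: "\<bar>fc x' - fc s\<bar> \<le> e" if "s \<in> {x'<..x}" for s
        proof -
          have sT: "s \<in> {0..T}" using that x x' by auto
          have "dist s x' < \<delta>1" using that d by (auto simp: dist_real_def)
          then have "dist (f s) (f x') < e" using ud x' sT by blast
          then show ?thesis using fc_eq[OF sT] fc_eq[OF x'] by (simp add: dist_real_def abs_minus_commute)
        qed
        have p: "\<bar>fc x' * (gc x - gc x') - J x' x\<bar> \<le> e * ((F x - F x') + (F2 x - F2 x'))"
          by (rule piece[OF le close])
        have "(F x - F x') + (F2 x - F2 x') \<le> Mt"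
          using Mt_ge[OF x] F_mono[of 0 x'] F2_mono[of 0 x'] x' by auto
        then have p2: "\<bar>fc x' * (gc x - gc x') - J x' x\<bar> \<le> e * Mt"
          using p e by (meson dual_order.trans less_imp_le mult_left_mono)
        have "J 0 x = J 0 x' + J x' x" using J_add[of 0 x' x] x' le by auto
        moreover have "\<bar>fc x' * (gc x - gc x')\<bar> \<le> Bf * \<bar>g x' - g x\<bar>"
          using Bf[of x'] gc_eq[OF x] gc_eq[OF x'] by (simp add: abs_mult mult_right_mono abs_minus_commute)
        ultimately show ?thesis using p2 by linarith
      qed
      have "Bf * \<bar>g x' - g x\<bar> \<le> Bf * (\<epsilon> / (2 * (Bf + 1)))"
        using gx Bf0 by (intro mult_left_mono) auto
      also have "\<dots> \<le> \<epsilon> / 2" using Bf0 \<open>\<epsilon> > 0\<close> by (simp add: field_simps)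
      finally have A: "Bf * \<bar>g x' - g x\<bar> \<le> \<epsilon> / 2" .
      have B: "e * Mt < \<epsilon> / 2" using \<open>\<epsilon> > 0\<close> Mt0 by (simp add: e_def field_simps)
      show "dist (J 0 x') (J 0 x) < \<epsilon>" using key A B by (simp add: dist_real_def)
    qed (use \<open>\<delta>1 > 0\<close> \<open>\<delta>2 > 0\<close> in simp)
  qed
  show ?thesis using hrs Jcont by blast
qed


lemma vnorm_nonneg: "0 \<le> vnorm k v" by (simp add: vnorm_def sum_nonneg)

lemma vnorm_coord: "i < k \<Longrightarrow> \<bar>v i\<bar> \<le> vnorm k v"
proof -
  assume "i < k"
  have "(v i)\<^sup>2 \<le> (\<Sum>j<k. (v j)\<^sup>2)"
    using \<open>i < k\<close> by (intro member_le_sum) auto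
  then have "sqrt ((v i)\<^sup>2) \<le> vnorm k v" unfolding vnorm_def by (rule real_sqrt_le_mono)
  then show ?thesis by simp
qed

definition psum :: "nat \<Rightarrow> path \<Rightarrow> nat \<times> (nat \<Rightarrow> real) \<Rightarrow> real" where
  "psum d Y mt = (\<Sum>i<fst mt. vnorm (d - 1) (\<lambda>k. Y (snd mt (Suc i)) k - Y (snd mt i) k))"

lemma tv_alt: "tv d t Y = (SUP mt \<in> {(m, tt). partition_of 0 t m tt}. ereal (psum d Y mt))"
  unfolding tv_def psum_def by simp

lemma tv_nonneg:
  assumes "0 \<le> t" shows "0 \<le> tv d t Y"
proof -
  define tt where "tt i = (if i = 0 then 0 else t)" for i :: nat
  have "(1, tt) \<in> {(m, tt). partition_of 0 t m tt}"
    using assms by (auto simp: partition_of_def tt_def)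
  then have "ereal (psum d Y (1, tt)) \<le> tv d t Y" unfolding tv_alt by (rule SUP_upper)
  moreover have "0 \<le> psum d Y (1, tt)" by (simp add: psum_def vnorm_nonneg)
  ultimately show ?thesis by (meson ereal_less_eq(5) order_trans)
qed

lemma tv_super:
  assumes a: "0 \<le> a" and ab: "a \<le> b" and fin: "tv d b Y = ereal B"
  shows "real_of_ereal (tv d a Y) + vnorm (d - 1) (\<lambda>k. Y b k - Y a k) \<le> B"
proof -
  define vn where "vn = vnorm (d - 1) (\<lambda>k. Y b k - Y a k)"
  have each: "ereal (psum d Y mt) \<le> ereal (B - vn)" if mt_in: "mt \<in> {(m, tt). partition_of 0 a m tt}" for mt
  proof -
    obtain m tt where mt: "mt = (m, tt)" and p: "partition_of 0 a m tt" using mt_in by auto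
    define tt' where "tt' = tt(Suc m := b)"
    have p': "partition_of 0 b (Suc m) tt'"
      using p ab unfolding partition_of_def tt'_def by (auto simp: less_Suc_eq)
    have "psum d Y (Suc m, tt') = psum d Y (m, tt) + vn"
    proof -
      have "psum d Y (Suc m, tt') = (\<Sum>i<m. vnorm (d - 1) (\<lambda>k. Y (tt' (Suc i)) k - Y (tt' i) k))
              + vnorm (d - 1) (\<lambda>k. Y (tt' (Suc m)) k - Y (tt' m) k)"
        by (simp add: psum_def)
      also have "(\<Sum>i<m. vnorm (d - 1) (\<lambda>k. Y (tt' (Suc i)) k - Y (tt' i) k))
          = (\<Sum>i<m. vnorm (d - 1) (\<lambda>k. Y (tt (Suc i)) k - Y (tt i) k))"
        by (intro sum.cong) (auto simp: tt'_def)
      also have "vnorm (d - 1) (\<lambda>k. Y (tt' (Suc m)) k - Y (tt' m) k) = vn"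
        using p by (simp add: tt'_def vn_def partition_of_def)
      finally show ?thesis by (simp add: psum_def)
    qed
    moreover have "ereal (psum d Y (Suc m, tt')) \<le> tv d b Y"
      unfolding tv_alt by (rule SUP_upper) (use p' in auto)
    ultimately show ?thesis using fin mt by simp
  qed
  have "tv d a Y \<le> ereal (B - vn)" unfolding tv_alt by (rule SUP_least) (rule each)
  moreover have "0 \<le> tv d a Y" by (rule tv_nonneg[OF a])
  ultimately have "real_of_ereal (tv d a Y) \<le> B - vn"
    by (cases "tv d a Y") auto
  then show ?thesis by (simp add: vn_def)
qed


lemma pow_step_ineq:
  fixes x y :: real
  assumes "0 \<le> x" "x \<le> y"
  shows "x ^ k / fact k * (y - x) \<le> (y ^ Suc k - x ^ Suc k) / fact (Suc k)"
proof -
  have "(\<Sum>p<Suc k. x ^ p * x ^ (k - p)) \<le> (\<Sum>p<Suc k. y ^ p * x ^ (k - p))"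
    using assms by (intro sum_mono mult_right_mono power_mono) auto
  moreover have "(\<Sum>p<Suc k. x ^ p * x ^ (k - p)) = real (Suc k) * x ^ k"
  proof -
    have "(\<Sum>p<Suc k. x ^ p * x ^ (k - p)) = (\<Sum>p<Suc k. x ^ k)"
      by (intro sum.cong refl) (auto simp: power_add[symmetric])
    then show ?thesis by simp
  qed
  ultimately have Sg: "real (Suc k) * x ^ k \<le> (\<Sum>p<Suc k. y ^ p * x ^ (k - p))" by simp
  have A: "real (Suc k) * x ^ k * (y - x) \<le> y ^ Suc k - x ^ Suc k"
  proof -
    have "(y - x) * (real (Suc k) * x ^ k) \<le> (y - x) * (\<Sum>p<Suc k. y ^ p * x ^ (k - p))"
      using Sg assms by (intro mult_left_mono) auto
    then show ?thesis using diff_power_eq_sum[of y k x] by (simp add: mult.commute)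
  qed
  have "x ^ k / fact k * (y - x) = (real (Suc k) * (x ^ k * (y - x))) / (real (Suc k) * fact k)"
    by (subst mult_divide_mult_cancel_left) auto
  also have "\<dots> = real (Suc k) * x ^ k * (y - x) / fact (Suc k)"
    by (simp add: fact_Suc mult.assoc)
  also have "\<dots> \<le> (y ^ Suc k - x ^ Suc k) / fact (Suc k)"
    using A by (intro divide_right_mono) auto
  finally show ?thesis .
qed

lemma sig_props:
  fixes Y :: path and G :: "real \<Rightarrow> real" and T :: real
  assumes T: "0 \<le> T"
    and Ycont: "\<And>i. continuous_on {0..T} (\<lambda>s. Y s i)"
    and dom: "\<And>i a b. 0 \<le> a \<Longrightarrow> a \<le> b \<Longrightarrow> b \<le> T \<Longrightarrow> \<bar>Y b i - Y a i\<bar> \<le> G b - G a"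
    and G0: "0 \<le> G 0"
  shows "continuous_on {0..T} (sig_rev Y J) \<and>
         (\<forall>t\<in>{0..T}. \<bar>sig_rev Y J t\<bar> \<le> G t ^ length J / fact (length J)) \<and>
         (\<forall>i J'. J = i # J' \<longrightarrow> (\<forall>t\<in>{0..T}. has_rs_integral (sig_rev Y J') (\<lambda>s. Y s i) 0 t (sig_rev Y J t)))"
proof (induction J)
  case Nil
  then show ?case by simp
next
  case (Cons i J)
  define k where "k = length J"
  have cf: "continuous_on {0..T} (sig_rev Y J)" using Cons.IH by blast
  have bf: "\<And>t. t \<in> {0..T} \<Longrightarrow> \<bar>sig_rev Y J t\<bar> \<le> G t ^ k / fact k" using Cons.IH k_def by blast
  obtain I where I: "\<forall>t\<in>{0..T}. has_rs_integral (sig_rev Y J) (\<lambda>s. Y s i) 0 t (I t)"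
    and Ic: "continuous_on {0..T} I"
    using rs_exists[OF T cf Ycont[of i], of G] dom by blast
  have eqI: "sig_rev Y (i # J) t = I t" if "t \<in> {0..T}" for t
    using rs_integral_eq[OF I[rule_format, OF that]] that by simp
  have Gmono: "G a \<le> G b" if "0 \<le> a" "a \<le> b" "b \<le> T" for a b
    using dom[OF that, of i] by linarith
  have cont: "continuous_on {0..T} (sig_rev Y (i # J))"
    using Ic by (rule continuous_on_eq) (use eqI in auto)
  have bound: "\<bar>sig_rev Y (i # J) t\<bar> \<le> G t ^ Suc k / fact (Suc k)" if t: "t \<in> {0..T}" for t
  proof -
    define S where "S N = (\<Sum>j<N. sig_rev Y J (t * real j / real N) *
        (Y (t * real (Suc j) / real N) i - Y (t * real j / real N) i))" for N
    have lim: "S \<longlonglongrightarrow> I t" unfolding S_def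
      by (rule rs_left_tendsto[OF I[rule_format, OF t]]) (use t in simp)
    have Sb: "\<bar>S N\<bar> \<le> G t ^ Suc k / fact (Suc k)" for N
    proof (cases "N = 0")
      case True then show ?thesis using G0 t Gmono[of 0 t] by (simp add: S_def)
    next
      case False
      define x where "x j = t * real j / real N" for j
      have xin: "x j \<in> {0..t}" if "j \<le> N" for j
        using t that False by (auto simp: x_def field_simps intro!: mult_left_mono)
      have xmono: "x j \<le> x (Suc j)" for j
        unfolding x_def using t by (intro divide_right_mono mult_left_mono) auto
      have "\<bar>S N\<bar> \<le> (\<Sum>j<N. \<bar>sig_rev Y J (x j) * (Y (x (Suc j)) i - Y (x j) i)\<bar>)"
        unfolding S_def x_def by (rule sum_abs)
      also have "\<dots> \<le> (\<Sum>j<N. G (x j) ^ k / fact k * (G (x (Suc j)) - G (x j)))"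
      proof (intro sum_mono)
        fix j assume "j \<in> {..<N}"
        then have j: "x j \<in> {0..t}" "x (Suc j) \<in> {0..t}" using xin by auto
        have "\<bar>sig_rev Y J (x j)\<bar> \<le> G (x j) ^ k / fact k" using bf j t by auto
        moreover have "\<bar>Y (x (Suc j)) i - Y (x j) i\<bar> \<le> G (x (Suc j)) - G (x j)"
          using dom[of "x j" "x (Suc j)" i] j t xmono[of j] by auto
        ultimately show "\<bar>sig_rev Y J (x j) * (Y (x (Suc j)) i - Y (x j) i)\<bar>
            \<le> G (x j) ^ k / fact k * (G (x (Suc j)) - G (x j))"
          unfolding abs_mult by (intro mult_mono) auto
      qed
      also have "\<dots> \<le> (\<Sum>j<N. (G (x (Suc j)) ^ Suc k - G (x j) ^ Suc k) / fact (Suc k))"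
      proof (intro sum_mono)
        fix j assume "j \<in> {..<N}"
        then have j: "x j \<in> {0..t}" "x (Suc j) \<in> {0..t}" using xin by auto
        have "0 \<le> G (x j)" using G0 Gmono[of 0 "x j"] j t by auto
        moreover have "G (x j) \<le> G (x (Suc j))" using Gmono[of "x j" "x (Suc j)"] j t xmono[of j] by auto
        ultimately show "G (x j) ^ k / fact k * (G (x (Suc j)) - G (x j))
            \<le> (G (x (Suc j)) ^ Suc k - G (x j) ^ Suc k) / fact (Suc k)"
          by (rule pow_step_ineq)
      qed
      also have "\<dots> = (G (x N) ^ Suc k - G (x 0) ^ Suc k) / fact (Suc k)"
        using sum_lessThan_telescope[of "\<lambda>j. G (x j) ^ Suc k" N]
        by (simp add: sum_divide_distrib[symmetric] del: power_Suc)
      also have "\<dots> \<le> G t ^ Suc k / fact (Suc k)"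
        using False G0 Gmono[of 0 t] t by (simp add: x_def divide_right_mono)
      finally show ?thesis .
    qed
    have "\<bar>I t\<bar> \<le> G t ^ Suc k / fact (Suc k)"
      using tendsto_rabs[OF lim] Sb by (intro LIMSEQ_le_const2) auto
    then show ?thesis using eqI[OF t] by simp
  qed
  show ?case
    using cont bound I eqI by (auto simp: k_def)
qed


lemma pow_fact_le_exp:
  fixes x :: real assumes "0 \<le> x" shows "x ^ k / fact k \<le> exp x"
proof -
  have s: "(\<lambda>n. x ^ n /\<^sub>R fact n) sums exp x" by (rule exp_converges)
  have "sum (\<lambda>n. x ^ n /\<^sub>R fact n) {k} \<le> suminf (\<lambda>n. x ^ n /\<^sub>R fact n)"
    by (rule sum_le_suminf) (use s sums_summable assms in auto)
  then show ?thesis using sums_unique[OF s] by (simp add: divide_inverse_commute)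
qed

fun sh :: "path \<Rightarrow> nat list \<Rightarrow> real \<Rightarrow> real" where
  "sh Y [] t = 1"
| "sh Y (i # J) t = lim (\<lambda>N. \<Sum>j<N. sh Y J (t * real j / real N) *
      (Y (t * real (Suc j) / real N) i - Y (t * real j / real N) i))"

lemma sh_eq:
  fixes Y :: path and G :: "real \<Rightarrow> real" and T :: real
  assumes T: "0 \<le> T"
    and Ycont: "\<And>i. continuous_on {0..T} (\<lambda>s. Y s i)"
    and dom: "\<And>i a b. 0 \<le> a \<Longrightarrow> a \<le> b \<Longrightarrow> b \<le> T \<Longrightarrow> \<bar>Y b i - Y a i\<bar> \<le> G b - G a"
    and G0: "0 \<le> G 0"
  shows "t \<in> {0..T} \<Longrightarrow> sh Y J t = sig_rev Y J t"
proof (induction J arbitrary: t)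
  case Nil then show ?case by simp
next
  case (Cons i J)
  have grid: "t * real j / real N \<in> {0..T}" if "j \<le> N" for j N
  proof (cases "N = 0")
    case False
    have "t * real j / real N \<le> t"
      using Cons.prems that False by (auto simp: field_simps intro!: mult_left_mono)
    then show ?thesis using Cons.prems by auto
  qed (use Cons.prems in auto)
  have "(\<lambda>N. \<Sum>j<N. sh Y J (t * real j / real N) * (Y (t * real (Suc j) / real N) i - Y (t * real j / real N) i))
      = (\<lambda>N. \<Sum>j<N. sig_rev Y J (t * real j / real N) * (Y (t * real (Suc j) / real N) i - Y (t * real j / real N) i))"
  proof (intro ext sum.cong refl)
    fix N j :: nat assume "j \<in> {..<N}"
    then have "j \<le> N" by simp
    then show "sh Y J (t * real j / real N) * (Y (t * real (Suc j) / real N) i - Y (t * real j / real N) i) =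
          sig_rev Y J (t * real j / real N) * (Y (t * real (Suc j) / real N) i - Y (t * real j / real N) i)"
      using Cons.IH[OF grid] by simp
  qed
  moreover have "(\<lambda>N. \<Sum>j<N. sig_rev Y J (t * real j / real N) * (Y (t * real (Suc j) / real N) i - Y (t * real j / real N) i))
      \<longlonglongrightarrow> sig_rev Y (i # J) t"
  proof (rule rs_left_tendsto)
    have "\<forall>i' J'. i # J = i' # J' \<longrightarrow> (\<forall>t\<in>{0..T}. has_rs_integral (sig_rev Y J') (\<lambda>s. Y s i') 0 t (sig_rev Y (i # J) t))"
      using sig_props[OF T Ycont dom G0, where J="i # J"] by (rule conjunct2[THEN conjunct2])
    then have "\<forall>t\<in>{0..T}. has_rs_integral (sig_rev Y J) (\<lambda>s. Y s i) 0 t (sig_rev Y (i # J) t)" by simp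
    then show "has_rs_integral (sig_rev Y J) (\<lambda>s. Y s i) 0 t (sig_rev Y (i # J) t)"
      using Cons.prems by blast
  qed (use Cons.prems in simp)
  ultimately show ?case by (simp add: limI)
qed

lemma coord_meas: "(\<lambda>Y. time_aug d Y s i) \<in> borel_measurable path_space"
proof (cases "i < d - 1")
  case True
  have a: "(\<lambda>Y. Y s) \<in> measurable path_space vec_space"
    unfolding path_space_def by (rule measurable_component_singleton) simp
  have b: "(\<lambda>v. v i) \<in> borel_measurable vec_space"
    unfolding vec_space_def by (rule measurable_component_singleton) simp
  have "(\<lambda>Y. Y s i) \<in> borel_measurable path_space" using measurable_compose[OF a b] by simp
  then show ?thesis using True by (simp add: time_aug_def)
next
  case False then show ?thesis by (simp add: time_aug_def)
qed


lemma sh_meas: "(\<lambda>Y. sh (time_aug d Y) J t) \<in> borel_measurable path_space"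
proof (induction J arbitrary: t)
  case Nil then show ?case by simp
next
  case (Cons i J)
  show ?case
    unfolding sh.simps
    by (intro borel_measurable_lim_metric borel_measurable_sum borel_measurable_times borel_measurable_diff
              Cons.IH coord_meas)
qed


definition Gf :: "nat \<Rightarrow> path \<Rightarrow> real \<Rightarrow> real" where
  "Gf d Y t = real_of_ereal (tv d t Y) + t"

lemma tv_mono:
  assumes a: "0 \<le> a" and ab: "a \<le> b"
  shows "tv d a Y \<le> tv d b Y"
  unfolding tv_alt[of d a]
proof (rule SUP_least)
  fix mt assume "mt \<in> {(m, tt). partition_of 0 a m tt}"
  then obtain m tt where mt: "mt = (m, tt)" and p: "partition_of 0 a m tt" by auto
  define tt' where "tt' = tt(Suc m := b)"
  have p': "partition_of 0 b (Suc m) tt'"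
    using p ab unfolding partition_of_def tt'_def by (auto simp: less_Suc_eq)
  have "psum d Y (Suc m, tt') = psum d Y (m, tt) + vnorm (d - 1) (\<lambda>k. Y (tt' (Suc m)) k - Y (tt' m) k)"
  proof -
    have "(\<Sum>i<m. vnorm (d - 1) (\<lambda>k. Y (tt' (Suc i)) k - Y (tt' i) k))
        = (\<Sum>i<m. vnorm (d - 1) (\<lambda>k. Y (tt (Suc i)) k - Y (tt i) k))"
      by (intro sum.cong) (auto simp: tt'_def)
    then show ?thesis by (simp add: psum_def)
  qed
  then have "psum d Y (m, tt) \<le> psum d Y (Suc m, tt')" using vnorm_nonneg by simp
  also have "ereal (psum d Y (Suc m, tt')) \<le> tv d b Y"
    unfolding tv_alt by (rule SUP_upper) (use p' in auto)
  finally show "ereal (psum d Y mt) \<le> tv d b Y" using mt by simp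
qed

lemma time_aug_ok:
  assumes Y: "Y \<in> path_dom d T x0" and T: "0 \<le> T"
  shows "\<And>i. continuous_on {0..T} (\<lambda>s. time_aug d Y s i)"
    and "\<And>i a b. 0 \<le> a \<Longrightarrow> a \<le> b \<Longrightarrow> b \<le> T \<Longrightarrow>
           \<bar>time_aug d Y b i - time_aug d Y a i\<bar> \<le> Gf d Y b - Gf d Y a"
    and "0 \<le> Gf d Y 0"
proof -
  fix i
  show "continuous_on {0..T} (\<lambda>s. time_aug d Y s i)"
  proof (cases "i < d - 1")
    case True then show ?thesis using Y by (simp add: time_aug_def path_dom_def)
  next
    case False then show ?thesis by (simp add: time_aug_def continuous_on_id)
  qed
next
  have fin: "tv d T Y < \<infinity>" using Y by (simp add: path_dom_def)
  have finb: "tv d b Y = ereal (real_of_ereal (tv d b Y))" if "0 \<le> b" "b \<le> T" for b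
  proof -
    have "0 \<le> tv d b Y" using tv_nonneg that by simp
    moreover have "tv d b Y < \<infinity>" using tv_mono[OF that(1) that(2), of d Y] fin by (rule le_less_trans)
    ultimately show ?thesis by (cases "tv d b Y") auto
  qed
  fix i a b assume ab: "0 \<le> a" "a \<le> b" "b \<le> T"
  have sup: "real_of_ereal (tv d a Y) + vnorm (d - 1) (\<lambda>k. Y b k - Y a k) \<le> real_of_ereal (tv d b Y)"
    by (rule tv_super[OF ab(1,2) finb]) (use ab in auto)
  show "\<bar>time_aug d Y b i - time_aug d Y a i\<bar> \<le> Gf d Y b - Gf d Y a"
  proof (cases "i < d - 1")
    case True
    then have "\<bar>Y b i - Y a i\<bar> \<le> vnorm (d - 1) (\<lambda>k. Y b k - Y a k)"
      using vnorm_coord[of i "d - 1" "\<lambda>k. Y b k - Y a k"] by simp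
    then show ?thesis using True sup ab by (simp add: time_aug_def Gf_def)
  next
    case False
    then show ?thesis using sup ab vnorm_nonneg[of "d - 1" "\<lambda>k. Y b k - Y a k"]
      by (simp add: time_aug_def Gf_def)
  qed
next
  show "0 \<le> Gf d Y 0"
    using tv_nonneg[of 0 d Y] by (simp add: Gf_def real_of_ereal_pos)
qed

lemma sig_bound:
  assumes Y: "Y \<in> path_dom d T x0" and T: "0 \<le> T" and CX: "tv d T Y < ereal CX"
  shows "\<bar>sig_term T (time_aug d Y) I\<bar> \<le> exp (CX + T)"
proof -
  have "\<bar>sig_rev (time_aug d Y) (rev I) T\<bar> \<le> Gf d Y T ^ length (rev I) / fact (length (rev I))"
    using sig_props[OF T time_aug_ok(1)[OF Y T] time_aug_ok(2)[OF Y T] time_aug_ok(3)[OF Y T], where J="rev I"] T by auto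
  also have "\<dots> \<le> exp (Gf d Y T)"
    by (rule pow_fact_le_exp) (use time_aug_ok(2)[OF Y T, of 0 T 0] time_aug_ok(3)[OF Y T] T in auto)
  also have "\<dots> \<le> exp (CX + T)"
  proof -
    have "0 \<le> tv d T Y" by (rule tv_nonneg[OF T])
    then have "real_of_ereal (tv d T Y) \<le> CX" using CX by (cases "tv d T Y") auto
    then show ?thesis by (simp add: Gf_def)
  qed
  finally show ?thesis by (simp add: sig_term_def)
qed

lemma sh_sig_term:
  assumes Y: "Y \<in> path_dom d T x0" and T: "0 \<le> T"
  shows "sh (time_aug d Y) (rev I) T = sig_term T (time_aug d Y) I"
  unfolding sig_term_def by (rule sh_eq[OF T time_aug_ok(1)[OF Y T] time_aug_ok(2)[OF Y T] time_aug_ok(3)[OF Y T]]) (use T in auto)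


section \<open>Logistic loss facts\<close>

lemma one_plus_exp_pos: "0 < 1 + exp (x::real)"
  using exp_gt_zero[of x] by linarith

lemma sigmoid_pos: "0 < sigmoid u" and sigmoid_lt1: "sigmoid u < 1"
  using one_plus_exp_pos[of u] by (simp_all add: sigmoid_def)

lemma sigmoid_mono: "a \<le> b \<Longrightarrow> sigmoid a \<le> sigmoid b"
proof -
  assume "a \<le> b"
  then have "exp a \<le> exp b" by simp
  then have "exp a * (1 + exp b) \<le> exp b * (1 + exp a)" by (simp add: algebra_simps)
  then show ?thesis unfolding sigmoid_def
    using one_plus_exp_pos[of a] one_plus_exp_pos[of b] by (simp add: divide_simps mult.commute)
qed

lemma deriv_softplus: "((\<lambda>x. ln (1 + exp x)) has_real_derivative sigmoid x) (at x)"
  unfolding sigmoid_def using one_plus_exp_pos[of x]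
  by (auto intro!: derivative_eq_intros)

lemma deriv_sigmoid: "(sigmoid has_real_derivative sigmoid x * (1 - sigmoid x)) (at x)"
proof -
  have "((\<lambda>x. exp x / (1 + exp x)) has_real_derivative
      (exp x * (1 + exp x) - exp x * exp x) / (1 + exp x)\<^sup>2) (at x)"
    using one_plus_exp_pos[of x] by (auto intro!: derivative_eq_intros simp: power2_eq_square)
  moreover have "(exp x * (1 + exp x) - exp x * exp x) / (1 + exp x)\<^sup>2 = sigmoid x * (1 - sigmoid x)"
    unfolding sigmoid_def using one_plus_exp_pos[of x] by (simp add: field_simps power2_eq_square)
  ultimately show ?thesis unfolding sigmoid_def[abs_def] by simp
qed

lemma softplus_mvt:
  fixes a b :: real
  shows "\<exists>c. min a b \<le> c \<and> c \<le> max a b \<and> ln (1 + exp b) - ln (1 + exp a) = sigmoid c * (b - a)"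
proof (cases "a = b")
  case True then show ?thesis by auto
next
  case False
  show ?thesis
  proof (cases "a < b")
    case True
    obtain z where "z > a" "z < b" "ln (1 + exp b) - ln (1 + exp a) = (b - a) * sigmoid z"
      using MVT2[OF True, of "\<lambda>x. ln (1 + exp x)" sigmoid] deriv_softplus by blast
    then show ?thesis using True by (intro exI[of _ z]) auto
  next
    case False
    then have ba: "b < a" using \<open>a \<noteq> b\<close> by simp
    obtain z where "z > b" "z < a" "ln (1 + exp a) - ln (1 + exp b) = (a - b) * sigmoid z"
      using MVT2[OF ba, of "\<lambda>x. ln (1 + exp x)" sigmoid] deriv_softplus by blast
    then show ?thesis using ba by (intro exI[of _ z]) (auto simp: algebra_simps)
  qed
qed

lemma sigmoid_lip: "\<bar>sigmoid b - sigmoid a\<bar> \<le> \<bar>b - a\<bar>"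
proof (cases "a = b")
  case True then show ?thesis by simp
next
  case False
  have d: "\<And>x. 0 \<le> sigmoid x * (1 - sigmoid x) \<and> sigmoid x * (1 - sigmoid x) \<le> 1"
    using sigmoid_pos sigmoid_lt1 by (simp add: mult_le_one less_imp_le)
  show ?thesis
  proof (cases "a < b")
    case True
    obtain z where "sigmoid b - sigmoid a = (b - a) * (sigmoid z * (1 - sigmoid z))"
      using MVT2[OF True, of sigmoid "\<lambda>x. sigmoid x * (1 - sigmoid x)"] deriv_sigmoid by blast
    then have "sigmoid b - sigmoid a \<le> (b - a) * 1" "0 \<le> sigmoid b - sigmoid a"
      using d[of z] True by (simp_all add: mult_left_mono)
    then show ?thesis using True by simp
  next
    case False
    then have ba: "b < a" using \<open>a \<noteq> b\<close> by simp
    obtain z where "sigmoid a - sigmoid b = (a - b) * (sigmoid z * (1 - sigmoid z))"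
      using MVT2[OF ba, of sigmoid "\<lambda>x. sigmoid x * (1 - sigmoid x)"] deriv_sigmoid by blast
    then have "sigmoid a - sigmoid b \<le> (a - b) * 1" "0 \<le> sigmoid a - sigmoid b"
      using d[of z] ba by (simp_all add: mult_left_mono)
    then show ?thesis using ba by simp
  qed
qed

lemma logloss_convex: "logloss y b \<ge> logloss y a + (sigmoid a - y) * (b - a)"
proof -
  obtain c where c: "min a b \<le> c" "c \<le> max a b" "ln (1 + exp b) - ln (1 + exp a) = sigmoid c * (b - a)"
    using softplus_mvt by blast
  have "sigmoid a * (b - a) \<le> sigmoid c * (b - a)"
  proof (cases "a \<le> b")
    case True
    then have "sigmoid a \<le> sigmoid c" using c by (intro sigmoid_mono) auto
    then show ?thesis using True by (intro mult_right_mono) auto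
  next
    case False
    then have "sigmoid c \<le> sigmoid a" using c by (intro sigmoid_mono) auto
    then show ?thesis using False by (intro mult_right_mono_neg) auto
  qed
  then show ?thesis using c(3) unfolding logloss_def by (simp add: algebra_simps)
qed

lemma logloss_convex': "logloss y b - logloss y a \<le> (sigmoid b - y) * (b - a)"
  using logloss_convex[where y=y and a=b and b=a] by (simp add: algebra_simps)

lemma logloss_nonneg: "y \<in> {0, 1} \<Longrightarrow> 0 \<le> logloss y \<eta>"
proof -
  assume y: "y \<in> {0, 1}"
  have "0 \<le> ln (1 + exp \<eta>)" using one_plus_exp_pos[of \<eta>] by simp
  moreover have "\<eta> \<le> ln (1 + exp \<eta>)"
  proof -
    have "exp \<eta> \<le> 1 + exp \<eta>" by simp
    then have "ln (exp \<eta>) \<le> ln (1 + exp \<eta>)" using one_plus_exp_pos[of \<eta>] by (subst ln_le_cancel_iff) auto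
    then show ?thesis by simp
  qed
  ultimately show ?thesis using y unfolding logloss_def by auto
qed

lemma logloss_lip: "y \<in> {0, 1} \<Longrightarrow> \<bar>logloss y b - logloss y a\<bar> \<le> \<bar>b - a\<bar>"
proof -
  assume y: "y \<in> {0, 1}"
  have l: "(sigmoid a - y) * (b - a) \<le> logloss y b - logloss y a" using logloss_convex[where y=y and a=a and b=b] by linarith
  have u: "logloss y b - logloss y a \<le> (sigmoid b - y) * (b - a)" by (rule logloss_convex')
  have s1: "\<bar>sigmoid a - y\<bar> \<le> 1" "\<bar>sigmoid b - y\<bar> \<le> 1"
    using y sigmoid_pos[of a] sigmoid_lt1[of a] sigmoid_pos[of b] sigmoid_lt1[of b] by auto
  have "\<bar>(sigmoid a - y) * (b - a)\<bar> \<le> \<bar>b - a\<bar>" "\<bar>(sigmoid b - y) * (b - a)\<bar> \<le> \<bar>b - a\<bar>"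
    using s1 unfolding abs_mult by (auto intro: mult_left_le_one_le)
  then show ?thesis using l u by linarith
qed

lemma logloss_zero: "logloss y 0 = ln 2"
  by (simp add: logloss_def)

lemma logloss_ln2: "y \<in> {0, 1} \<Longrightarrow> \<bar>logloss y \<eta> - ln 2\<bar> \<le> \<bar>\<eta>\<bar>"
  using logloss_lip[of y \<eta> 0] by (simp add: logloss_zero)


section \<open>Index sets and balls\<close>

lemma lists_eq: "{I. length I \<le> p \<and> set I \<subseteq> {..<d::nat}} = {xs. set xs \<subseteq> {..<d} \<and> length xs \<le> p}"
  by blast

lemma finite_lists: "finite {I. length I \<le> p \<and> set I \<subseteq> {..<d::nat}}"
  unfolding lists_eq by (rule finite_lists_length_le) simp

lemma finite_idx: "finite (idx d p q)"
  unfolding idx_def by (intro finite_UnI finite_imageI finite_lists finite_lessThan)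

lemma card_idx: "card (idx d p q) \<le> sd d p + q"
proof -
  have "card (idx d p q) \<le> card (Inl ` {I. length I \<le> p \<and> set I \<subseteq> {..<d}} :: (nat list + nat) set)
      + card (Inr ` {..<q} :: (nat list + nat) set)"
    unfolding idx_def by (rule card_Un_le)
  also have "\<dots> \<le> card {I. length I \<le> p \<and> set I \<subseteq> {..<d}} + card {..<q}"
    by (intro add_mono card_image_le finite_lists) simp
  also have "card {I. length I \<le> p \<and> set I \<subseteq> {..<d}} = sd d p"
    unfolding lists_eq using card_lists_length_le[of "{..<d}" p] by (simp add: sd_def)
  finally show ?thesis by simp
qed


lemma idx_mono: "p \<le> p' \<Longrightarrow> idx d p q \<subseteq> idx d p' q"
  unfolding idx_def by auto

lemma coef_mono: "p \<le> p' \<Longrightarrow> coef_space d p q \<subseteq> coef_space d p' q"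
  unfolding coef_space_def using idx_mono[of p p' d q] by blast

lemma lin_pred_mono:
  assumes "\<theta> \<in> coef_space d p q" "p \<le> p'"
  shows "lin_pred d T p' q \<theta> X z = lin_pred d T p q \<theta> X z"
  unfolding lin_pred_def
  by (rule sum.mono_neutral_right[OF finite_idx idx_mono[OF assms(2)]])
     (use assms(1) in \<open>auto simp: coef_space_def\<close>)

lemma l1_mono:
  assumes "\<theta> \<in> coef_space d p q" "p \<le> p'"
  shows "(\<Sum>x\<in>idx d p' q. \<bar>\<theta> x\<bar>) = (\<Sum>x\<in>idx d p q. \<bar>\<theta> x\<bar>)"
  by (rule sum.mono_neutral_right[OF finite_idx idx_mono[OF assms(2)]])
     (use assms(1) in \<open>auto simp: coef_space_def\<close>)


lemma ball_mono: "p \<le> p' \<Longrightarrow> ball1 d p q r \<subseteq> ball1 d p' q r"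
proof
  fix \<theta> assume pp: "p \<le> p'" and th: "\<theta> \<in> ball1 d p q r"
  then have c: "\<theta> \<in> coef_space d p q" and s: "(\<Sum>x\<in>idx d p q. \<bar>\<theta> x\<bar>) \<le> r" by (auto simp: ball1_def)
  have "\<theta> \<in> coef_space d p' q" using coef_mono[OF pp] c by blast
  moreover have "(\<Sum>x\<in>idx d p' q. \<bar>\<theta> x\<bar>) \<le> r" using l1_mono[OF c pp] s by simp
  ultimately show "\<theta> \<in> ball1 d p' q r" by (simp add: ball1_def)
qed

lemma zero_in_ball: "0 \<le> r \<Longrightarrow> (\<lambda>_. 0) \<in> ball1 d p q r"
  by (simp add: ball1_def coef_space_def)

lemma ball_sub_coef: "ball1 d p q r \<subseteq> coef_space d p q"
  by (simp add: ball1_def)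

lemma sd_mono: "p \<le> p' \<Longrightarrow> sd d p \<le> sd d p'"
  unfolding sd_def by (rule sum_mono2) auto

lemma sd_ge: "1 \<le> d \<Longrightarrow> p + 1 \<le> sd d p"
proof -
  assume "1 \<le> d"
  have "(\<Sum>k\<le>p. (1::nat)) \<le> (\<Sum>k\<le>p. d ^ k)"
    using \<open>1 \<le> d\<close> by (intro sum_mono) (simp add: one_le_power)
  then show ?thesis by (simp add: sd_def)
qed


section \<open>Attainment of minima on l1 balls\<close>

lemma conv_subseq:
  fixes f :: "nat \<Rightarrow> 'a \<Rightarrow> real"
  assumes "finite S" and bnd: "\<And>k x. \<bar>f k x\<bar> \<le> r"
  shows "\<exists>h l. strict_mono h \<and> (\<forall>x\<in>S. (\<lambda>k. f (h k) x) \<longlonglongrightarrow> l x)"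
  using assms(1)
proof (induction S rule: finite_induct)
  case empty
  show ?case by (intro exI[of _ id]) (auto simp: strict_mono_def)
next
  case (insert x S)
  then obtain h l where h: "strict_mono h" and l: "\<forall>y\<in>S. (\<lambda>k. f (h k) y) \<longlonglongrightarrow> l y" by blast
  have "bounded (range (\<lambda>k. f (h k) x))"
    by (rule boundedI[of _ r]) (use bnd in auto)
  then obtain l' h2 where h2: "strict_mono h2" and l': "((\<lambda>k. f (h k) x) \<circ> h2) \<longlonglongrightarrow> l'"
    using bounded_imp_convergent_subsequence by blast
  show ?case
  proof (intro exI[of _ "h \<circ> h2"] exI[of _ "l(x := l')"] conjI ballI)
    show "strict_mono (h \<circ> h2)" using h h2 by (rule strict_mono_o)
    fix y assume "y \<in> insert x S"
    show "(\<lambda>k. f ((h \<circ> h2) k) y) \<longlonglongrightarrow> (l(x := l')) y"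
    proof (cases "y = x")
      case True then show ?thesis using l' by (simp add: o_def)
    next
      case False
      then have "y \<in> S" using \<open>y \<in> insert x S\<close> by simp
      have "((\<lambda>k. f (h k) y) \<circ> h2) \<longlonglongrightarrow> l y"
        by (rule LIMSEQ_subseq_LIMSEQ[OF l[rule_format, OF \<open>y \<in> S\<close>] h2])
      then show ?thesis using False by (simp add: o_def)
    qed
  qed
qed

lemma attain_min:
  fixes R :: "('a \<Rightarrow> real) \<Rightarrow> real" and S :: "'a set"
  assumes S: "finite S" and r: "0 \<le> r"
    and Bdef: "B = {\<theta>. (\<forall>x. x \<notin> S \<longrightarrow> \<theta> x = 0) \<and> (\<Sum>x\<in>S. \<bar>\<theta> x\<bar>) \<le> r}"
    and lip: "\<And>\<theta> \<theta>'. \<theta> \<in> B \<Longrightarrow> \<theta>' \<in> B \<Longrightarrow> \<bar>R \<theta> - R \<theta>'\<bar> \<le> K * (\<Sum>x\<in>S. \<bar>\<theta> x - \<theta>' x\<bar>)"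
    and lb: "\<And>\<theta>. \<theta> \<in> B \<Longrightarrow> c \<le> R \<theta>"
  shows "\<exists>\<theta>\<in>B. R \<theta> = (INF \<theta>\<in>B. R \<theta>)"
proof -
  define L where "L = (INF \<theta>\<in>B. R \<theta>)"
  have ne: "B \<noteq> {}" using r Bdef by (auto intro!: exI[of _ "\<lambda>_. 0"])
  have bdd: "bdd_below (R ` B)" by (rule bdd_belowI2[of _ c]) (rule lb)
  have ex: "\<exists>\<theta>. \<theta> \<in> B \<and> R \<theta> < L + inverse (real (Suc k))" for k
  proof -
    have "Inf (R ` B) < L + inverse (real (Suc k))" by (simp add: L_def)
    then obtain v where "v \<in> R ` B" "v < L + inverse (real (Suc k))"
      using cInf_lessD[of "R ` B"] ne by blast
    then show ?thesis by blast
  qed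
  define th where "th k = (SOME \<theta>. \<theta> \<in> B \<and> R \<theta> < L + inverse (real (Suc k)))" for k
  have th: "th k \<in> B" "R (th k) < L + inverse (real (Suc k))" for k
    using someI_ex[OF ex[of k]] unfolding th_def by auto
  have thb: "\<bar>th k x\<bar> \<le> r" for k x
  proof (cases "x \<in> S")
    case True
    have "\<bar>th k x\<bar> \<le> (\<Sum>x\<in>S. \<bar>th k x\<bar>)" by (rule member_le_sum) (use True S in auto)
    also have "\<dots> \<le> r" using th(1)[of k] Bdef by auto
    finally show ?thesis .
  next
    case False then show ?thesis using th(1)[of k] Bdef r by auto
  qed
  obtain h l where h: "strict_mono h" and l: "\<forall>x\<in>S. (\<lambda>k. th (h k) x) \<longlonglongrightarrow> l x"
    using conv_subseq[of S th r, OF S thb] by blast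
  define ts where "ts x = (if x \<in> S then l x else 0)" for x
  have sum_lim: "(\<lambda>k. \<Sum>x\<in>S. \<bar>th (h k) x\<bar>) \<longlonglongrightarrow> (\<Sum>x\<in>S. \<bar>ts x\<bar>)"
    unfolding ts_def using l by (auto intro!: tendsto_sum tendsto_rabs)
  have "(\<Sum>x\<in>S. \<bar>ts x\<bar>) \<le> r"
    by (rule LIMSEQ_le_const2[OF sum_lim]) (use th(1) Bdef in auto)
  then have tsB: "ts \<in> B" unfolding Bdef ts_def by auto
  have c0: "(\<lambda>k. \<bar>th (h k) x - ts x\<bar>) \<longlonglongrightarrow> 0" if "x \<in> S" for x
  proof -
    have "(\<lambda>k. th (h k) x) \<longlonglongrightarrow> ts x" using l that by (simp add: ts_def)
    then have "(\<lambda>k. th (h k) x - ts x) \<longlonglongrightarrow> 0" by (rule LIM_zero)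
    then show ?thesis by (rule tendsto_rabs_zero)
  qed
  have dist0: "(\<lambda>k. K * (\<Sum>x\<in>S. \<bar>th (h k) x - ts x\<bar>)) \<longlonglongrightarrow> 0"
    by (intro tendsto_mult_right_zero tendsto_null_sum c0)
  have Rlim: "(\<lambda>k. R (th (h k))) \<longlonglongrightarrow> R ts"
  proof -
    have "(\<lambda>k. R (th (h k)) - R ts) \<longlonglongrightarrow> 0"
    proof (rule Lim_null_comparison)
      show "\<forall>\<^sub>F k in sequentially. norm (R (th (h k)) - R ts) \<le> K * (\<Sum>x\<in>S. \<bar>th (h k) x - ts x\<bar>)"
        using lip[OF th(1) tsB] by simp
      show "(\<lambda>k. K * (\<Sum>x\<in>S. \<bar>th (h k) x - ts x\<bar>)) \<longlonglongrightarrow> 0" using dist0 by simp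
    qed
    then show ?thesis by (simp add: LIM_zero_iff)
  qed
  have "R ts \<le> L"
  proof -
    have lim2: "(\<lambda>k. R (th (h k)) - inverse (real (Suc k))) \<longlonglongrightarrow> R ts - 0"
      by (intro tendsto_diff Rlim LIMSEQ_inverse_real_of_nat)
    have "R (th (h k)) - inverse (real (Suc k)) \<le> L" for k
    proof -
      have "k \<le> h k" using h by (rule seq_suble)
      then have "inverse (real (Suc (h k))) \<le> inverse (real (Suc k))"
        by (intro le_imp_inverse_le) auto
      then show ?thesis using th(2)[of "h k"] by linarith
    qed
    then show ?thesis using LIMSEQ_le_const2[OF lim2] by auto
  qed
  moreover have "L \<le> R ts" unfolding L_def by (rule cINF_lower[OF bdd tsB])
  ultimately show ?thesis using tsB L_def by (intro bexI[of _ ts]) auto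
qed


definition fhat :: "nat \<Rightarrow> real \<Rightarrow> nat list + nat \<Rightarrow> (path \<times> (nat \<Rightarrow> real)) \<times> real \<Rightarrow> real" where
  "fhat d T x w = (case x of Inl I \<Rightarrow> sh (time_aug d (fst (fst w))) (rev I) T | Inr j \<Rightarrow> snd (fst w) j)"

definition etah :: "nat \<Rightarrow> real \<Rightarrow> (nat list + nat) set \<Rightarrow> (nat list + nat \<Rightarrow> real) \<Rightarrow> (path \<times> (nat \<Rightarrow> real)) \<times> real \<Rightarrow> real" where
  "etah d T S \<theta> w = (\<Sum>x\<in>S. \<theta> x * fhat d T x w)"

definition lossh :: "nat \<Rightarrow> real \<Rightarrow> (nat list + nat) set \<Rightarrow> (nat list + nat \<Rightarrow> real) \<Rightarrow> (path \<times> (nat \<Rightarrow> real)) \<times> real \<Rightarrow> real" where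
  "lossh d T S \<theta> w = logloss (snd w) (etah d T S \<theta> w)"

definition gradh :: "nat \<Rightarrow> real \<Rightarrow> (nat list + nat) set \<Rightarrow> (nat list + nat \<Rightarrow> real) \<Rightarrow> nat list + nat \<Rightarrow> (path \<times> (nat \<Rightarrow> real)) \<times> real \<Rightarrow> real" where
  "gradh d T S \<theta> x w = (sigmoid (etah d T S \<theta> w) - snd w) * fhat d T x w"

lemma fhat_meas[measurable]: "fhat d T x \<in> borel_measurable triple_space"
proof (cases x)
  case (Inl I)
  have a: "(\<lambda>w. fst (fst w)) \<in> measurable triple_space path_space"
    unfolding triple_space_def by (intro measurable_compose[OF measurable_fst measurable_fst])
  have "(\<lambda>w. sh (time_aug d (fst (fst w))) (rev I) T) \<in> borel_measurable triple_space"
    using measurable_compose[OF a sh_meas] by simp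
  moreover have "fhat d T x = (\<lambda>w. sh (time_aug d (fst (fst w))) (rev I) T)"
    using Inl by (simp add: fun_eq_iff fhat_def)
  ultimately show ?thesis by simp
next
  case (Inr j)
  have a: "(\<lambda>w. snd (fst w)) \<in> measurable triple_space vec_space"
    unfolding triple_space_def by (intro measurable_compose[OF measurable_fst measurable_snd])
  have b: "(\<lambda>v. v j) \<in> borel_measurable vec_space"
    unfolding vec_space_def by (rule measurable_component_singleton) simp
  have "(\<lambda>w. snd (fst w) j) \<in> borel_measurable triple_space"
    using measurable_compose[OF a b] by simp
  moreover have "fhat d T x = (\<lambda>w. snd (fst w) j)"
    using Inr by (simp add: fun_eq_iff fhat_def)
  ultimately show ?thesis by simp
qed


lemma snd_meas[measurable]: "(\<lambda>w. snd w) \<in> borel_measurable triple_space"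
  unfolding triple_space_def by (rule measurable_snd)

lemma etah_meas[measurable]: "etah d T S \<theta> \<in> borel_measurable triple_space"
  unfolding etah_def by measurable

lemma lossh_meas[measurable]: "lossh d T S \<theta> \<in> borel_measurable triple_space"
  unfolding lossh_def logloss_def by measurable

lemma gradh_meas[measurable]: "gradh d T S \<theta> x \<in> borel_measurable triple_space"
  unfolding gradh_def sigmoid_def by measurable


lemma fhat_eq:
  assumes "Y \<in> path_dom d T x0" "0 \<le> T"
  shows "fhat d T x ((Y, zz), yy) = feature d T Y zz x"
  by (cases x) (simp_all add: fhat_def feature_def sh_sig_term[OF assms])

lemma etah_eq:
  assumes "Y \<in> path_dom d T x0" "0 \<le> T"
  shows "etah d T (idx d p q) \<theta> ((Y, zz), yy) = lin_pred d T p q \<theta> Y zz"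
  unfolding etah_def lin_pred_def using fhat_eq[OF assms] by simp

lemma fhat_bound:
  assumes Y: "Y \<in> path_dom d T x0" and T: "0 \<le> T" and CX: "tv d T Y < ereal CX"
    and z: "vnorm q zz < Cz" and x: "x \<in> idx d p q"
  shows "\<bar>fhat d T x ((Y, zz), yy)\<bar> \<le> Cz + exp (CX + T)"
proof (cases x)
  case (Inl I)
  have "0 \<le> Cz" using z vnorm_nonneg[of q zz] by simp
  then show ?thesis using sig_bound[OF Y T CX, of I] Inl fhat_eq[OF Y T, of x zz yy]
    by (simp add: feature_def)
next
  case (Inr j)
  then have "j < q" using x by (auto simp: idx_def)
  then have "\<bar>zz j\<bar> \<le> vnorm q zz" by (rule vnorm_coord)
  then show ?thesis using Inr z by (simp add: fhat_def) (smt (verit) exp_gt_zero)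
qed

lemma pt_bounds:
  fixes f :: "'a \<Rightarrow> real"
  assumes S: "finite S" and fb: "\<And>x. x \<in> S \<Longrightarrow> \<bar>f x\<bar> \<le> B" and th: "(\<Sum>x\<in>S. \<bar>\<theta> x\<bar>) \<le> r"
    and B: "0 \<le> B"
  shows "\<bar>\<Sum>x\<in>S. \<theta> x * f x\<bar> \<le> r * B"
proof -
  have "\<bar>\<Sum>x\<in>S. \<theta> x * f x\<bar> \<le> (\<Sum>x\<in>S. \<bar>\<theta> x\<bar> * B)"
    by (rule order_trans[OF sum_abs]) (auto simp: abs_mult intro!: sum_mono mult_left_mono fb)
  also have "\<dots> = (\<Sum>x\<in>S. \<bar>\<theta> x\<bar>) * B" by (simp add: sum_distrib_right)
  also have "\<dots> \<le> r * B" using th B by (rule mult_right_mono)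
  finally show ?thesis .
qed


lemma hoeff_iid:
  fixes h :: "'b \<Rightarrow> real" and n :: nat and Ts :: "nat \<Rightarrow> 'a \<Rightarrow> 'b" and \<epsilon> :: real
  assumes M: "prob_space M" and n: "0 < n"
    and Tsm: "\<And>i. Ts i \<in> measurable M N" and Trm: "Tr \<in> measurable M N"
    and indep: "prob_space.indep_vars M (\<lambda>_. N) Ts UNIV"
    and dis: "\<And>i. distr M N (Ts i) = distr M N Tr"
    and hm: "h \<in> borel_measurable N"
    and bnd: "AE \<omega> in M. h (Tr \<omega>) \<in> {a..b}" and ab: "a < b" and e: "0 \<le> \<epsilon>"
  shows "measure M {\<omega> \<in> space M. (\<Sum>i<n. h (Ts i \<omega>)) / n \<le> (\<integral>\<omega>. h (Tr \<omega>) \<partial>M) - \<epsilon>}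
            \<le> exp (- 2 * n * \<epsilon>\<^sup>2 / (b - a)\<^sup>2)"
    and "measure M {\<omega> \<in> space M. (\<Sum>i<n. h (Ts i \<omega>)) / n \<ge> (\<integral>\<omega>. h (Tr \<omega>) \<partial>M) + \<epsilon>}
            \<le> exp (- 2 * n * \<epsilon>\<^sup>2 / (b - a)\<^sup>2)"
    and "measure M {\<omega> \<in> space M. \<bar>(\<Sum>i<n. h (Ts i \<omega>)) / n - (\<integral>\<omega>. h (Tr \<omega>) \<partial>M)\<bar> \<ge> \<epsilon>}
            \<le> 2 * exp (- 2 * n * \<epsilon>\<^sup>2 / (b - a)\<^sup>2)"
proof -
  interpret prob_space M by (rule M)
  have ind: "indep_vars (\<lambda>_. borel) (\<lambda>i \<omega>. h (Ts i \<omega>)) {..<n}"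
    by (rule indep_vars_subset[OF indep_vars_compose2[OF indep, of "\<lambda>_. h"]]) (use hm in auto)
  have dd: "distr M borel (\<lambda>\<omega>. h (Ts i \<omega>)) = distr M borel (\<lambda>\<omega>. h (Tr \<omega>))" for i
  proof -
    have "distr M borel (\<lambda>\<omega>. h (Ts i \<omega>)) = distr (distr M N (Ts i)) borel h"
      using distr_distr[OF hm Tsm[of i]] by (simp add: comp_def)
    also have "\<dots> = distr (distr M N Tr) borel h" by (simp add: dis)
    also have "\<dots> = distr M borel (\<lambda>\<omega>. h (Tr \<omega>))"
      using distr_distr[OF hm Trm] by (simp add: comp_def)
    finally show ?thesis .
  qed
  have b1: "AE x in M. a \<le> h (Tr x)" using bnd by eventually_elim auto
  have b2: "AE x in M. h (Tr x) \<le> b" using bnd by eventually_elim auto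
  have rv: "(\<lambda>\<omega>. h (Tr \<omega>)) \<in> borel_measurable M" using measurable_compose[OF Trm hm] by simp
  interpret H: Hoeffding_ineq_iid M "{..<n}" "\<lambda>i \<omega>. h (Ts i \<omega>)" "\<lambda>\<omega>. h (Tr \<omega>)" a b
    "expectation (\<lambda>\<omega>. h (Tr \<omega>))"
    by unfold_locales (simp_all add: ind dd rv b1 b2)
  have ne: "{..<n} \<noteq> {}" using n by auto
  show "measure M {\<omega> \<in> space M. (\<Sum>i<n. h (Ts i \<omega>)) / n \<le> (\<integral>\<omega>. h (Tr \<omega>) \<partial>M) - \<epsilon>}
            \<le> exp (- 2 * n * \<epsilon>\<^sup>2 / (b - a)\<^sup>2)"
    using H.Hoeffding_ineq_le'[of \<epsilon>] e ab ne by simp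
  show "measure M {\<omega> \<in> space M. (\<Sum>i<n. h (Ts i \<omega>)) / n \<ge> (\<integral>\<omega>. h (Tr \<omega>) \<partial>M) + \<epsilon>}
            \<le> exp (- 2 * n * \<epsilon>\<^sup>2 / (b - a)\<^sup>2)"
    using H.Hoeffding_ineq_ge'[of \<epsilon>] e ab ne by simp
  show "measure M {\<omega> \<in> space M. \<bar>(\<Sum>i<n. h (Ts i \<omega>)) / n - (\<integral>\<omega>. h (Tr \<omega>) \<partial>M)\<bar> \<ge> \<epsilon>}
            \<le> 2 * exp (- 2 * n * \<epsilon>\<^sup>2 / (b - a)\<^sup>2)"
    using H.Hoeffding_ineq_abs_ge'[of \<epsilon>] e ab ne by simp
qed


locale P4 =
  fixes M :: "'w measure"
    and X :: "'w \<Rightarrow> path" and z :: "'w \<Rightarrow> nat \<Rightarrow> real" and y :: "'w \<Rightarrow> real"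
    and Xs :: "nat \<Rightarrow> 'w \<Rightarrow> path" and zs :: "nat \<Rightarrow> 'w \<Rightarrow> nat \<Rightarrow> real" and ys :: "nat \<Rightarrow> 'w \<Rightarrow> real"
    and d q :: nat and T :: real and x0 :: "nat \<Rightarrow> real"
    and F :: "path \<Rightarrow> real" and \<gamma> :: "nat \<Rightarrow> real"
    and C_F C_\<gamma> C_X C_z r \<rho> C_pen :: real
    and pstar :: nat and \<theta>star :: "nat list + nat \<Rightarrow> real"
    and n p :: nat
    and C c5 :: real and L :: "nat \<Rightarrow> real" and n3 :: nat
  assumes M: "prob_space M"
    and T: "T > 0" and d: "d \<ge> 2" and q: "q \<ge> 1"
    and \<rho>: "0 < \<rho>" "\<rho> < 1/2" and Cpen: "C_pen > 0"
    and X_meas: "X \<in> M \<rightarrow>\<^sub>M path_space" and z_meas: "z \<in> M \<rightarrow>\<^sub>M vec_space"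
    and y_meas: "y \<in> borel_measurable M"
    and X_dom: "\<forall>\<omega>\<in>space M. X \<omega> \<in> path_dom d T x0"
    and y01: "\<forall>\<omega>\<in>space M. y \<omega> \<in> {0, 1}"
    and samples_meas: "\<forall>i. (\<lambda>\<omega>. ((Xs i \<omega>, zs i \<omega>), ys i \<omega>)) \<in> M \<rightarrow>\<^sub>M triple_space"
    and samples_indep: "prob_space.indep_vars M (\<lambda>_. triple_space) (\<lambda>i \<omega>. ((Xs i \<omega>, zs i \<omega>), ys i \<omega>)) UNIV"
    and samples_distr: "\<forall>i. distr M triple_space (\<lambda>\<omega>. ((Xs i \<omega>, zs i \<omega>), ys i \<omega>))
                          = distr M triple_space (\<lambda>\<omega>. ((X \<omega>, z \<omega>), y \<omega>))"
    and Xs_dom: "\<forall>i. \<forall>\<omega>\<in>space M. Xs i \<omega> \<in> path_dom d T x0"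
    and ys01: "\<forall>i. \<forall>\<omega>\<in>space M. ys i \<omega> \<in> {0, 1}"
    \<comment> \<open>the logistic model: logit P(y = 1 | X, z) = F(X) + z^T gamma\<close>
    and F_cont: "cont_functional d T x0 F"
    and F_meas: "(\<lambda>\<omega>. F (X \<omega>)) \<in> borel_measurable M"
    and logit: "\<forall>A \<in> sets (path_space \<Otimes>\<^sub>M vec_space).
       measure M {\<omega> \<in> space M. y \<omega> = 1 \<and> (X \<omega>, z \<omega>) \<in> A}
       = (\<integral>\<omega>. indicator A (X \<omega>, z \<omega>) * sigmoid (F (X \<omega>) + (\<Sum>j<q. z \<omega> j * \<gamma> j)) \<partial>M)"
    and A1_F: "\<exists>c < C_F. \<forall>Y \<in> path_dom d T x0. \<bar>F Y\<bar> \<le> c"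
    and A1_\<gamma>: "(\<Sum>j<q. \<bar>\<gamma> j\<bar>) \<le> C_\<gamma>"
    and A2: "AE \<omega> in M. tv d T (X \<omega>) < ereal C_X \<and> vnorm q (z \<omega>) < C_z"
    and A2s: "\<forall>i. AE \<omega> in M. tv d T (Xs i \<omega>) < ereal C_X \<and> vnorm q (zs i \<omega>) < C_z"
    and A4: "(INF G\<gamma> \<in> {(G, \<gamma>'). cont_functional d T x0 G \<and> (\<forall>Y\<in>path_dom d T x0. \<bar>G Y\<bar> \<le> C_F)
                              \<and> (\<Sum>j<q. \<bar>\<gamma>' j\<bar>) \<le> C_\<gamma>}.
               \<integral>\<omega>. logloss (y \<omega>) (fst G\<gamma> (X \<omega>) + (\<Sum>j<q. z \<omega> j * snd G\<gamma> j)) \<partial>M)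
            \<le> (INF p\<theta> \<in> (SIGMA p:UNIV. coef_space d p q). risk M X z y d T q (fst p\<theta>) (snd p\<theta>))"
    and r: "r > 0"
    and A3_attain: "\<theta>star \<in> ball1 d pstar q r"
    and A3_opt: "risk M X z y d T q pstar \<theta>star
                   = (INF p\<theta> \<in> (SIGMA p:UNIV. coef_space d p q). risk M X z y d T q (fst p\<theta>) (snd p\<theta>))"
    and A3_min: "\<forall>p' < pstar. \<not> (\<exists>\<theta> \<in> ball1 d p' q r. risk M X z y d T q p' \<theta>
                   = (INF p\<theta> \<in> (SIGMA p:UNIV. coef_space d p q). risk M X z y d T q (fst p\<theta>) (snd p\<theta>)))"
    and C_def: "C = 2 * (C_z + exp (C_X + T))"
    and L_def: "L = (\<lambda>p. (INF \<theta> \<in> ball1 d p q r. risk M X z y d T q p \<theta>))"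
    and c5_def: "c5 = 1 / (8 * r * (288 * C\<^sup>2 * r + C))"
    and n3_def: "n3 = nat \<lceil>((2 * sqrt (real (sd d pstar + q)) / (L (pstar - 1) - risk M X z y d T q pstar \<theta>star))
                      * (sqrt (exp (real q)) * C_pen + 432 * C * r * sqrt pi)) powr (1 / \<rho>)\<rceil>"
    and p: "p < pstar" and n: "n \<ge> n3"


sublocale P4 \<subseteq> prob_space M by (rule M)

context P4
begin

definition "Tr \<omega> = ((X \<omega>, z \<omega>), y \<omega>)"
definition "Ts i \<omega> = ((Xs i \<omega>, zs i \<omega>), ys i \<omega>)"
definition "B = C_z + exp (C_X + T)"
definition "good \<omega> \<longleftrightarrow> tv d T (X \<omega>) < ereal C_X \<and> vnorm q (z \<omega>) < C_z"
definition "goods i \<omega> \<longleftrightarrow> tv d T (Xs i \<omega>) < ereal C_X \<and> vnorm q (zs i \<omega>) < C_z"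

lemma Tr_meas[measurable]: "Tr \<in> measurable M triple_space"
  unfolding Tr_def triple_space_def by (intro measurable_Pair X_meas z_meas y_meas)

lemma Ts_meas[measurable]: "Ts i \<in> measurable M triple_space"
  using samples_meas unfolding Ts_def by blast

lemma AE_good: "AE \<omega> in M. good \<omega>"
  using A2 unfolding good_def by simp

lemma AE_goods: "AE \<omega> in M. goods i \<omega>"
  using A2s unfolding goods_def by simp

lemma Cz_pos: "0 < C_z"
proof -
  have "AE \<omega> in M. 0 < C_z"
    using A2 by eventually_elim (use vnorm_nonneg in \<open>auto intro: le_less_trans\<close>)
  then show ?thesis using AE_const by simp
qed

lemma B_pos: "0 < B" using Cz_pos by (simp add: B_def add_pos_pos)

lemma C_eq: "C = 2 * B" by (simp add: C_def B_def)

lemma Tr_y: "snd (Tr \<omega>) = y \<omega>" by (simp add: Tr_def)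
lemma Ts_y: "snd (Ts i \<omega>) = ys i \<omega>" by (simp add: Ts_def)

lemma fhat_Tr_bound:
  assumes "\<omega> \<in> space M" "good \<omega>" "x \<in> idx d p' q"
  shows "\<bar>fhat d T x (Tr \<omega>)\<bar> \<le> B"
  using fhat_bound[OF X_dom[rule_format, OF assms(1)] _ _ _ assms(3), where CX=C_X and Cz=C_z] assms T
  unfolding good_def B_def Tr_def by simp

lemma fhat_Ts_bound:
  assumes "\<omega> \<in> space M" "goods i \<omega>" "x \<in> idx d p' q"
  shows "\<bar>fhat d T x (Ts i \<omega>)\<bar> \<le> B"
  using fhat_bound[OF Xs_dom[rule_format, OF assms(1)] _ _ _ assms(3), where CX=C_X and Cz=C_z] assms T
  unfolding goods_def B_def Ts_def by simp

lemma lin_eq: "\<omega> \<in> space M \<Longrightarrow> lin_pred d T p' q \<theta> (X \<omega>) (z \<omega>) = etah d T (idx d p' q) \<theta> (Tr \<omega>)"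
  using etah_eq[OF X_dom[rule_format] less_imp_le[OF T]] by (simp add: Tr_def)

lemma lin_eq_s: "\<omega> \<in> space M \<Longrightarrow> lin_pred d T p' q \<theta> (Xs i \<omega>) (zs i \<omega>) = etah d T (idx d p' q) \<theta> (Ts i \<omega>)"
  using etah_eq[OF Xs_dom[rule_format] less_imp_le[OF T]] by (simp add: Ts_def)

lemma risk_eq: "risk M X z y d T q p' \<theta> = (\<integral>\<omega>. lossh d T (idx d p' q) \<theta> (Tr \<omega>) \<partial>M)"
  unfolding risk_def lossh_def by (rule Bochner_Integration.integral_cong[OF refl]) (simp add: lin_eq Tr_y)

lemma emp_eq: "\<omega> \<in> space M \<Longrightarrow>
   emp_risk Xs zs ys d T q n' p' \<theta> \<omega> = (\<Sum>i<n'. lossh d T (idx d p' q) \<theta> (Ts i \<omega>)) / n'"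
  unfolding emp_risk_def lossh_def by (simp add: lin_eq_s Ts_y)

lemma eta_bound:
  assumes "\<omega> \<in> space M" "good \<omega>" "(\<Sum>x\<in>idx d p' q. \<bar>\<theta> x\<bar>) \<le> \<rho>'"
  shows "\<bar>etah d T (idx d p' q) \<theta> (Tr \<omega>)\<bar> \<le> \<rho>' * B"
  unfolding etah_def by (rule pt_bounds[OF finite_idx _ assms(3)]) (use fhat_Tr_bound[OF assms(1,2)] B_pos in auto)

lemma eta_bound_s:
  assumes "\<omega> \<in> space M" "goods i \<omega>" "(\<Sum>x\<in>idx d p' q. \<bar>\<theta> x\<bar>) \<le> \<rho>'"
  shows "\<bar>etah d T (idx d p' q) \<theta> (Ts i \<omega>)\<bar> \<le> \<rho>' * B"
  unfolding etah_def by (rule pt_bounds[OF finite_idx _ assms(3)]) (use fhat_Ts_bound[OF assms(1,2)] B_pos in auto)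

lemma loss_bound:
  assumes "\<omega> \<in> space M" "good \<omega>" "(\<Sum>x\<in>idx d p' q. \<bar>\<theta> x\<bar>) \<le> \<rho>'"
  shows "\<bar>lossh d T (idx d p' q) \<theta> (Tr \<omega>) - ln 2\<bar> \<le> \<rho>' * B"
  using logloss_ln2[of "y \<omega>" "etah d T (idx d p' q) \<theta> (Tr \<omega>)"] y01 assms eta_bound[OF assms]
  unfolding lossh_def Tr_y by auto

lemma loss_bound_s:
  assumes "\<omega> \<in> space M" "goods i \<omega>" "(\<Sum>x\<in>idx d p' q. \<bar>\<theta> x\<bar>) \<le> \<rho>'"
  shows "\<bar>lossh d T (idx d p' q) \<theta> (Ts i \<omega>) - ln 2\<bar> \<le> \<rho>' * B"
  using logloss_ln2[of "ys i \<omega>" "etah d T (idx d p' q) \<theta> (Ts i \<omega>)"] ys01 assms eta_bound_s[OF assms]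
  unfolding lossh_def Ts_y by auto

lemma grad_bound:
  assumes "\<omega> \<in> space M" "good \<omega>" "x \<in> idx d p' q"
  shows "\<bar>gradh d T S \<theta> x (Tr \<omega>)\<bar> \<le> B"
proof -
  have "\<bar>sigmoid (etah d T S \<theta> (Tr \<omega>)) - y \<omega>\<bar> \<le> 1"
    using y01 assms(1) sigmoid_pos[of "etah d T S \<theta> (Tr \<omega>)"] sigmoid_lt1[of "etah d T S \<theta> (Tr \<omega>)"] by auto
  then have "\<bar>sigmoid (etah d T S \<theta> (Tr \<omega>)) - y \<omega>\<bar> * \<bar>fhat d T x (Tr \<omega>)\<bar> \<le> 1 * \<bar>fhat d T x (Tr \<omega>)\<bar>"
    by (rule mult_right_mono) simp
  then show ?thesis unfolding gradh_def Tr_y abs_mult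
    using fhat_Tr_bound[OF assms] by simp
qed

lemma grad_bound_s:
  assumes "\<omega> \<in> space M" "goods i \<omega>" "x \<in> idx d p' q"
  shows "\<bar>gradh d T S \<theta> x (Ts i \<omega>)\<bar> \<le> B"
proof -
  have ysi: "ys i \<omega> \<in> {0, 1}" using ys01 assms(1) by blast
  have "\<bar>sigmoid (etah d T S \<theta> (Ts i \<omega>)) - ys i \<omega>\<bar> \<le> 1"
    using ysi sigmoid_pos[of "etah d T S \<theta> (Ts i \<omega>)"] sigmoid_lt1[of "etah d T S \<theta> (Ts i \<omega>)"] by auto
  then have "\<bar>sigmoid (etah d T S \<theta> (Ts i \<omega>)) - ys i \<omega>\<bar> * \<bar>fhat d T x (Ts i \<omega>)\<bar> \<le> 1 * \<bar>fhat d T x (Ts i \<omega>)\<bar>"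
    by (rule mult_right_mono) simp
  then show ?thesis unfolding gradh_def Ts_y abs_mult
    using fhat_Ts_bound[OF assms] by simp
qed

end


context P4
begin

lemma int_bound:
  fixes h :: "(path \<times> (nat \<Rightarrow> real)) \<times> real \<Rightarrow> real" and K :: real
  assumes hm: "h \<in> borel_measurable triple_space"
    and b: "\<And>\<omega>. \<omega> \<in> space M \<Longrightarrow> good \<omega> \<Longrightarrow> \<bar>h (Tr \<omega>)\<bar> \<le> K"
  shows "integrable M (\<lambda>\<omega>. h (Tr \<omega>))"
proof (rule integrable_const_bound[where B=K])
  show "AE \<omega> in M. norm (h (Tr \<omega>)) \<le> K"
    using AE_good AE_space by eventually_elim (use b in auto)
  show "(\<lambda>\<omega>. h (Tr \<omega>)) \<in> borel_measurable M" using measurable_compose[OF Tr_meas hm] by simp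
qed

lemma loss_nonneg: "\<omega> \<in> space M \<Longrightarrow> 0 \<le> lossh d T S \<theta> (Tr \<omega>)"
  unfolding lossh_def Tr_y using y01 by (intro logloss_nonneg) auto

lemma int_loss: "(\<Sum>x\<in>idx d p' q. \<bar>\<theta> x\<bar>) \<le> \<rho>' \<Longrightarrow> integrable M (\<lambda>\<omega>. lossh d T (idx d p' q) \<theta> (Tr \<omega>))"
proof (rule int_bound[where K="ln 2 + \<rho>' * B"])
  fix \<omega> assume a: "(\<Sum>x\<in>idx d p' q. \<bar>\<theta> x\<bar>) \<le> \<rho>'" "\<omega> \<in> space M" "good \<omega>"
  have "\<bar>lossh d T (idx d p' q) \<theta> (Tr \<omega>) - ln 2\<bar> \<le> \<rho>' * B" by (rule loss_bound[OF a(2,3,1)])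
  moreover have "0 \<le> lossh d T (idx d p' q) \<theta> (Tr \<omega>)" by (rule loss_nonneg[OF a(2)])
  ultimately show "\<bar>lossh d T (idx d p' q) \<theta> (Tr \<omega>)\<bar> \<le> ln 2 + \<rho>' * B" by simp
qed simp

lemma int_grad: "x \<in> idx d p' q \<Longrightarrow> integrable M (\<lambda>\<omega>. gradh d T S \<theta> x (Tr \<omega>))"
  by (rule int_bound[where K="B"]) (use grad_bound in auto)

lemma risk_nonneg: "0 \<le> risk M X z y d T q p' \<theta>"
  unfolding risk_eq by (intro integral_nonneg_AE AE_I2 loss_nonneg)

lemma risk_mono_eq:
  assumes "\<theta> \<in> coef_space d p1 q" "p1 \<le> p2"
  shows "risk M X z y d T q p2 \<theta> = risk M X z y d T q p1 \<theta>"
  unfolding risk_def using lin_pred_mono[OF assms] by simp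

abbreviation "R p' \<theta> \<equiv> risk M X z y d T q p' \<theta>"

definition "INFall = (INF p\<theta> \<in> (SIGMA p:UNIV. coef_space d p q). risk M X z y d T q (fst p\<theta>) (snd p\<theta>))"

lemma INFall_le: "\<theta> \<in> coef_space d p' q \<Longrightarrow> INFall \<le> R p' \<theta>"
proof -
  assume th: "\<theta> \<in> coef_space d p' q"
  have "bdd_below ((\<lambda>p\<theta>. R (fst p\<theta>) (snd p\<theta>)) ` (SIGMA p:UNIV. coef_space d p q))"
    by (rule bdd_belowI2[of _ 0]) (rule risk_nonneg)
  then show ?thesis unfolding INFall_def using cINF_lower[of "\<lambda>p\<theta>. R (fst p\<theta>) (snd p\<theta>)" _ "(p', \<theta>)"] th
    by auto
qed

lemma ball_ne: "ball1 d p' q r \<noteq> {}" using zero_in_ball[of r] r by auto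

lemma bdd_L: "bdd_below ((\<lambda>\<theta>. R p' \<theta>) ` ball1 d p' q r)"
  by (rule bdd_belowI2[of _ 0]) (rule risk_nonneg)

lemma L_lower: "\<theta> \<in> ball1 d p' q r \<Longrightarrow> L p' \<le> R p' \<theta>"
  unfolding L_def by (rule cINF_lower[OF bdd_L])

lemma L_ge_INFall: "INFall \<le> L p'"
  unfolding L_def by (rule cINF_greatest[OF ball_ne]) (use INFall_le ball_sub_coef in blast)

lemma Rstar_eq: "R pstar \<theta>star = INFall"
  using A3_opt by (simp add: INFall_def)

lemma L_pstar: "L pstar = R pstar \<theta>star"
  using L_lower[OF A3_attain] L_ge_INFall[of pstar] Rstar_eq by simp

lemma L_mono: "p1 \<le> p2 \<Longrightarrow> L p2 \<le> L p1"
proof -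
  assume p12: "p1 \<le> p2"
  have "L p2 \<le> (INF \<theta>\<in>ball1 d p1 q r. R p1 \<theta>)"
  proof (rule cINF_greatest[OF ball_ne])
    fix \<theta> assume th: "\<theta> \<in> ball1 d p1 q r"
    have "L p2 \<le> R p2 \<theta>" using L_lower ball_mono[OF p12] th by blast
    also have "\<dots> = R p1 \<theta>" using risk_mono_eq[OF _ p12] th ball_sub_coef by blast
    finally show "L p2 \<le> R p1 \<theta>" .
  qed
  then show ?thesis by (simp add: L_def)
qed

lemma etah_diff: "etah d T S \<theta> w - etah d T S \<theta>' w = (\<Sum>x\<in>S. (\<theta> x - \<theta>' x) * fhat d T x w)"
  unfolding etah_def by (simp add: sum_subtractf[symmetric] algebra_simps)

lemma risk_lip:
  assumes th: "\<theta> \<in> ball1 d p' q r" and th': "\<theta>' \<in> ball1 d p' q r"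
  shows "\<bar>R p' \<theta> - R p' \<theta>'\<bar> \<le> B * (\<Sum>x\<in>idx d p' q. \<bar>\<theta> x - \<theta>' x\<bar>)"
proof -
  let ?f = "\<lambda>\<omega>. lossh d T (idx d p' q) \<theta> (Tr \<omega>)"
  let ?g = "\<lambda>\<omega>. lossh d T (idx d p' q) \<theta>' (Tr \<omega>)"
  let ?D = "\<Sum>x\<in>idx d p' q. \<bar>\<theta> x - \<theta>' x\<bar>"
  have if': "integrable M ?f" "integrable M ?g"
    using int_loss[where p'=p' and \<theta>=\<theta> and \<rho>'=r] int_loss[where p'=p' and \<theta>=\<theta>' and \<rho>'=r] th th' by (auto simp: ball1_def)
  have "R p' \<theta> - R p' \<theta>' = (\<integral>\<omega>. ?f \<omega> - ?g \<omega> \<partial>M)"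
    unfolding risk_eq using if' by simp
  moreover have "\<bar>\<integral>\<omega>. ?f \<omega> - ?g \<omega> \<partial>M\<bar> \<le> (\<integral>\<omega>. B * ?D \<partial>M)"
  proof -
    have "\<bar>\<integral>\<omega>. ?f \<omega> - ?g \<omega> \<partial>M\<bar> \<le> (\<integral>\<omega>. \<bar>?f \<omega> - ?g \<omega>\<bar> \<partial>M)"
      by (rule integral_abs_bound)
    also have "\<dots> \<le> (\<integral>\<omega>. B * ?D \<partial>M)"
    proof (rule integral_mono_AE)
      show "integrable M (\<lambda>\<omega>. \<bar>?f \<omega> - ?g \<omega>\<bar>)" using if' by simp
      show "integrable M (\<lambda>\<omega>. B * ?D)" by simp
      show "AE \<omega> in M. \<bar>?f \<omega> - ?g \<omega>\<bar> \<le> B * ?D"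
        using AE_good AE_space
      proof eventually_elim
        case (elim \<omega>)
        have "\<bar>?f \<omega> - ?g \<omega>\<bar> \<le> \<bar>etah d T (idx d p' q) \<theta> (Tr \<omega>) - etah d T (idx d p' q) \<theta>' (Tr \<omega>)\<bar>"
          unfolding lossh_def Tr_y by (rule logloss_lip) (use y01 elim in auto)
        also have "\<dots> \<le> ?D * B"
          unfolding etah_diff
          by (rule pt_bounds[OF finite_idx _ order_refl]) (use fhat_Tr_bound[OF elim(2,1)] B_pos in auto)
        finally show ?case by (simp add: mult.commute)
      qed
    qed
    finally show ?thesis .
  qed
  ultimately show ?thesis by (simp add: prob_space)
qed

lemma ball_eq: "ball1 d p' q r = {\<theta>. (\<forall>x. x \<notin> idx d p' q \<longrightarrow> \<theta> x = 0) \<and> (\<Sum>x\<in>idx d p' q. \<bar>\<theta> x\<bar>) \<le> r}"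
  by (auto simp: ball1_def coef_space_def)

lemma attain: "\<exists>\<theta>\<in>ball1 d p' q r. R p' \<theta> = L p'"
  unfolding L_def
  by (rule attain_min[OF finite_idx less_imp_le[OF r] ball_eq risk_lip risk_nonneg])

lemma gap_pos: "0 < pstar \<Longrightarrow> R pstar \<theta>star < L (pstar - 1)"
proof -
  assume "0 < pstar"
  obtain \<theta>' where th': "\<theta>' \<in> ball1 d (pstar - 1) q r" and eq: "R (pstar - 1) \<theta>' = L (pstar - 1)"
    using attain by blast
  have "R pstar \<theta>star \<le> L (pstar - 1)" using Rstar_eq L_ge_INFall by simp
  moreover have "R pstar \<theta>star \<noteq> L (pstar - 1)"
  proof
    assume "R pstar \<theta>star = L (pstar - 1)"
    then have "R (pstar - 1) \<theta>' = INFall" using eq Rstar_eq by simp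
    then show False using A3_min \<open>0 < pstar\<close> th' unfolding INFall_def by auto
  qed
  ultimately show ?thesis by simp
qed

end


context P4
begin

lemma etah_comb: "etah d T S (\<lambda>x. \<theta>p x + t * (\<theta> x - \<theta>p x)) w' = etah d T S \<theta>p w' + t * (etah d T S \<theta> w' - etah d T S \<theta>p w')"
  unfolding etah_def by (simp add: algebra_simps sum.distrib sum_distrib_left sum_subtractf)

lemma comb_ball:
  assumes thp: "\<theta>p \<in> ball1 d p' q r" and th: "\<theta> \<in> ball1 d p' q r" and t: "0 \<le> t" "t \<le> 1"
  shows "(\<lambda>x. \<theta>p x + t * (\<theta> x - \<theta>p x)) \<in> ball1 d p' q r"
proof -
  have c: "(\<lambda>x. \<theta>p x + t * (\<theta> x - \<theta>p x)) \<in> coef_space d p' q"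
    using thp th by (auto simp: ball1_def coef_space_def)
  have "(\<Sum>x\<in>idx d p' q. \<bar>\<theta>p x + t * (\<theta> x - \<theta>p x)\<bar>) \<le> (\<Sum>x\<in>idx d p' q. (1 - t) * \<bar>\<theta>p x\<bar> + t * \<bar>\<theta> x\<bar>)"
  proof (rule sum_mono)
    fix x
    have "\<theta>p x + t * (\<theta> x - \<theta>p x) = (1 - t) * \<theta>p x + t * \<theta> x" by (simp add: algebra_simps)
    also have "\<bar>\<dots>\<bar> \<le> \<bar>(1 - t) * \<theta>p x\<bar> + \<bar>t * \<theta> x\<bar>" by (rule abs_triangle_ineq)
    also have "\<dots> = (1 - t) * \<bar>\<theta>p x\<bar> + t * \<bar>\<theta> x\<bar>" using t by (simp add: abs_mult)
    finally show "\<bar>\<theta>p x + t * (\<theta> x - \<theta>p x)\<bar> \<le> (1 - t) * \<bar>\<theta>p x\<bar> + t * \<bar>\<theta> x\<bar>" .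
  qed
  also have "\<dots> = (1 - t) * (\<Sum>x\<in>idx d p' q. \<bar>\<theta>p x\<bar>) + t * (\<Sum>x\<in>idx d p' q. \<bar>\<theta> x\<bar>)"
    by (simp add: sum.distrib sum_distrib_left)
  also have "\<dots> \<le> (1 - t) * r + t * r"
    using thp th t by (intro add_mono mult_left_mono) (auto simp: ball1_def)
  also have "\<dots> = r" by (simp add: algebra_simps)
  finally show ?thesis using c by (simp add: ball1_def)
qed

lemma first_order:
  assumes thp: "\<theta>p \<in> ball1 d p' q r" and eq: "R p' \<theta>p = L p'" and th: "\<theta> \<in> ball1 d p' q r"
  shows "0 \<le> (\<Sum>x\<in>idx d p' q. (\<theta> x - \<theta>p x) * (\<integral>\<omega>. gradh d T (idx d p' q) \<theta>p x (Tr \<omega>) \<partial>M))"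
proof -
  define S where "S = idx d p' q"
  define W where "W w' = etah d T S \<theta> w' - etah d T S \<theta>p w'" for w'
  define E where "E = (\<integral>\<omega>. (sigmoid (etah d T S \<theta>p (Tr \<omega>)) - y \<omega>) * W (Tr \<omega>) \<partial>M)"
  define K where "K = (2 * r * B)\<^sup>2"
  have thr: "(\<Sum>x\<in>S. \<bar>\<theta> x\<bar>) \<le> r" "(\<Sum>x\<in>S. \<bar>\<theta>p x\<bar>) \<le> r" using thp th by (auto simp: ball1_def S_def)
  have Wb: "\<bar>W (Tr \<omega>)\<bar> \<le> 2 * r * B" if "\<omega> \<in> space M" "good \<omega>" for \<omega>
    using eta_bound[OF that thr(1)[unfolded S_def]] eta_bound[OF that thr(2)[unfolded S_def]]
    unfolding W_def S_def by simp
  have Wm[measurable]: "W \<in> borel_measurable triple_space" unfolding W_def by measurable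
  have gradsum: "(\<Sum>x\<in>S. (\<theta> x - \<theta>p x) * (\<integral>\<omega>. gradh d T S \<theta>p x (Tr \<omega>) \<partial>M)) = E"
  proof -
    have "(\<Sum>x\<in>S. (\<theta> x - \<theta>p x) * (\<integral>\<omega>. gradh d T S \<theta>p x (Tr \<omega>) \<partial>M))
        = (\<Sum>x\<in>S. (\<integral>\<omega>. (\<theta> x - \<theta>p x) * gradh d T S \<theta>p x (Tr \<omega>) \<partial>M))" by simp
    also have "\<dots> = (\<integral>\<omega>. (\<Sum>x\<in>S. (\<theta> x - \<theta>p x) * gradh d T S \<theta>p x (Tr \<omega>)) \<partial>M)"
      by (subst Bochner_Integration.integral_sum) (use int_grad in \<open>auto simp: S_def\<close>)
    also have "\<dots> = E" unfolding E_def W_def etah_diff gradh_def Tr_y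
      by (simp add: sum_distrib_left algebra_simps)
    finally show ?thesis .
  qed
  define A where "A w' = (sigmoid (etah d T S \<theta>p w') - snd w') * W w'" for w'
  have Am[measurable]: "A \<in> borel_measurable triple_space" unfolding A_def sigmoid_def by measurable
  have Ab: "\<bar>A (Tr \<omega>)\<bar> \<le> 2 * r * B" if o: "\<omega> \<in> space M" "good \<omega>" for \<omega>
  proof -
    have s1: "\<bar>sigmoid (etah d T S \<theta>p (Tr \<omega>)) - y \<omega>\<bar> \<le> 1"
      using y01 o(1) sigmoid_pos[of "etah d T S \<theta>p (Tr \<omega>)"] sigmoid_lt1[of "etah d T S \<theta>p (Tr \<omega>)"] by auto
    have "\<bar>A (Tr \<omega>)\<bar> \<le> 1 * (2 * r * B)"
      unfolding A_def abs_mult Tr_y by (rule mult_mono[OF s1 Wb[OF o]]) auto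
    then show ?thesis by simp
  qed
  have W2b: "\<bar>(W (Tr \<omega>))\<^sup>2\<bar> \<le> K" if o: "\<omega> \<in> space M" "good \<omega>" for \<omega>
  proof -
    have "\<bar>W (Tr \<omega>)\<bar> \<le> 2 * r * B" by (rule Wb[OF o])
    then have "\<bar>W (Tr \<omega>)\<bar>\<^sup>2 \<le> (2 * r * B)\<^sup>2" by (rule power_mono) simp
    then show ?thesis by (simp add: K_def)
  qed
  have intA: "integrable M (\<lambda>\<omega>. A (Tr \<omega>))" by (rule int_bound[OF Am Ab])
  have intW2: "integrable M (\<lambda>\<omega>. (W (Tr \<omega>))\<^sup>2)"
    using int_bound[of "\<lambda>w'. (W w')\<^sup>2", OF _ W2b] by simp
  have E_eq: "E = (\<integral>\<omega>. A (Tr \<omega>) \<partial>M)" by (simp add: E_def A_def Tr_y)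
  have W2le: "(\<integral>\<omega>. (W (Tr \<omega>))\<^sup>2 \<partial>M) \<le> K"
  proof -
    have "(\<integral>\<omega>. (W (Tr \<omega>))\<^sup>2 \<partial>M) \<le> (\<integral>\<omega>. K \<partial>M)"
    proof (rule integral_mono_AE[OF intW2])
      show "AE \<omega> in M. (W (Tr \<omega>))\<^sup>2 \<le> K"
        using AE_good AE_space by eventually_elim (use W2b in fastforce)
    qed simp
    then show ?thesis by (simp add: prob_space)
  qed
  have step: "0 \<le> t * E + t\<^sup>2 * K" if t: "0 < t" "t \<le> 1" for t
  proof -
    define \<theta>t where "\<theta>t x = \<theta>p x + t * (\<theta> x - \<theta>p x)" for x
    have tb: "\<theta>t \<in> ball1 d p' q r" unfolding \<theta>t_def by (rule comb_ball[OF thp th]) (use t in auto)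
    have "L p' \<le> R p' \<theta>t" by (rule L_lower[OF tb])
    then have "0 \<le> R p' \<theta>t - R p' \<theta>p" using eq by simp
    also have "R p' \<theta>t - R p' \<theta>p = (\<integral>\<omega>. lossh d T S \<theta>t (Tr \<omega>) - lossh d T S \<theta>p (Tr \<omega>) \<partial>M)"
      unfolding risk_eq S_def
      using int_loss[where p'=p' and \<theta>=\<theta>t and \<rho>'=r] int_loss[where p'=p' and \<theta>=\<theta>p and \<rho>'=r] tb thp
      by (auto simp: ball1_def)
    also have "\<dots> \<le> (\<integral>\<omega>. t * ((sigmoid (etah d T S \<theta>p (Tr \<omega>)) - y \<omega>) * W (Tr \<omega>)) + t\<^sup>2 * (W (Tr \<omega>))\<^sup>2 \<partial>M)"
    proof (rule integral_mono)
      show "integrable M (\<lambda>\<omega>. lossh d T S \<theta>t (Tr \<omega>) - lossh d T S \<theta>p (Tr \<omega>))"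
        using int_loss[where p'=p' and \<theta>=\<theta>t and \<rho>'=r] int_loss[where p'=p' and \<theta>=\<theta>p and \<rho>'=r] tb thp
        by (auto simp: ball1_def S_def)
      show "integrable M (\<lambda>\<omega>. t * ((sigmoid (etah d T S \<theta>p (Tr \<omega>)) - y \<omega>) * W (Tr \<omega>)) + t\<^sup>2 * (W (Tr \<omega>))\<^sup>2)"
        using intA intW2 by (simp add: A_def Tr_y)
      fix \<omega> assume o: "\<omega> \<in> space M"
      let ?e0 = "etah d T S \<theta>p (Tr \<omega>)"
      let ?w = "W (Tr \<omega>)"
      have et: "etah d T S \<theta>t (Tr \<omega>) = ?e0 + t * ?w"
        unfolding \<theta>t_def W_def by (rule etah_comb)
      have "lossh d T S \<theta>t (Tr \<omega>) - lossh d T S \<theta>p (Tr \<omega>) \<le> (sigmoid (?e0 + t * ?w) - y \<omega>) * (t * ?w)"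
        unfolding lossh_def et Tr_y using logloss_convex'[of "y \<omega>" "?e0 + t * ?w" ?e0] by simp
      also have "\<dots> = (sigmoid ?e0 - y \<omega>) * (t * ?w) + (sigmoid (?e0 + t * ?w) - sigmoid ?e0) * (t * ?w)"
        by (simp add: algebra_simps)
      also have "(sigmoid (?e0 + t * ?w) - sigmoid ?e0) * (t * ?w) \<le> \<bar>t * ?w\<bar> * \<bar>t * ?w\<bar>"
      proof -
        have "(sigmoid (?e0 + t * ?w) - sigmoid ?e0) * (t * ?w) \<le> \<bar>sigmoid (?e0 + t * ?w) - sigmoid ?e0\<bar> * \<bar>t * ?w\<bar>"
          by (metis abs_ge_self abs_mult)
        also have "\<dots> \<le> \<bar>t * ?w\<bar> * \<bar>t * ?w\<bar>"
          using sigmoid_lip[of "?e0 + t * ?w" ?e0] by (intro mult_right_mono) auto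
        finally show ?thesis .
      qed
      finally show "lossh d T S \<theta>t (Tr \<omega>) - lossh d T S \<theta>p (Tr \<omega>)
          \<le> t * ((sigmoid ?e0 - y \<omega>) * ?w) + t\<^sup>2 * ?w\<^sup>2"
        using t by (simp add: power2_eq_square abs_mult algebra_simps)
    qed
    also have "\<dots> = t * E + t\<^sup>2 * (\<integral>\<omega>. (W (Tr \<omega>))\<^sup>2 \<partial>M)"
      using intA intW2 by (simp add: E_eq A_def Tr_y)
    also have "\<dots> \<le> t * E + t\<^sup>2 * K"
      using W2le by (intro add_left_mono mult_left_mono) auto
    finally show ?thesis .
  qed
  have "0 \<le> E"
  proof (rule ccontr)
    assume "\<not> 0 \<le> E"
    then have En: "E < 0" by simp
    have Kp: "0 < K" using r B_pos by (simp add: K_def)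
    define t where "t = min 1 (- E / (2 * K))"
    have "E / (2 * K) < 0" using En Kp by (simp add: divide_neg_pos)
    then have t0: "0 < t" "t \<le> 1" using En Kp by (auto simp: t_def)
    have "t \<le> - E / (2 * K)" by (simp add: t_def)
    then have "t * K \<le> (- E / (2 * K)) * K" using Kp by (intro mult_right_mono) auto
    also have "\<dots> = - E / 2" using Kp by simp
    finally have "E + t * K < 0" using En by linarith
    then have "t * (E + t * K) < 0" using t0 by (simp add: mult_pos_neg)
    moreover have "0 \<le> t * (E + t * K)" using step[OF t0] by (simp add: algebra_simps power2_eq_square)
    ultimately show False by simp
  qed
  then show ?thesis using gradsum by (simp add: S_def)
qed

end


context P4
begin

lemma Ts_eq: "Ts = (\<lambda>i \<omega>. ((Xs i \<omega>, zs i \<omega>), ys i \<omega>))" by (simp add: fun_eq_iff Ts_def)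
lemma Tr_eq: "Tr = (\<lambda>\<omega>. ((X \<omega>, z \<omega>), y \<omega>))" by (simp add: fun_eq_iff Tr_def)

lemma indep_Ts: "indep_vars (\<lambda>_. triple_space) Ts UNIV"
  using samples_indep by (simp add: Ts_eq)

lemma distr_Ts: "distr M triple_space (Ts i) = distr M triple_space Tr"
  using samples_distr by (simp add: Ts_eq Tr_eq)

lemma emp_risk_nonneg: "\<omega> \<in> space M \<Longrightarrow> 0 \<le> emp_risk Xs zs ys d T q n' p' \<theta> \<omega>"
  unfolding emp_risk_def using ys01
  by (intro mult_nonneg_nonneg sum_nonneg logloss_nonneg) auto

lemma emp_L_nonneg: "\<omega> \<in> space M \<Longrightarrow> 0 \<le> emp_L Xs zs ys d T q r n' p' \<omega>"
  unfolding emp_L_def by (rule cINF_greatest[OF ball_ne]) (rule emp_risk_nonneg)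

lemma bdd_emp: "\<omega> \<in> space M \<Longrightarrow> bdd_below ((\<lambda>\<theta>. emp_risk Xs zs ys d T q n' p' \<theta> \<omega>) ` ball1 d p' q r)"
  by (rule bdd_belowI2[of _ 0]) (rule emp_risk_nonneg)

lemma emp_L_le: "\<omega> \<in> space M \<Longrightarrow> \<theta> \<in> ball1 d p' q r \<Longrightarrow> emp_L Xs zs ys d T q r n' p' \<omega> \<le> emp_risk Xs zs ys d T q n' p' \<theta> \<omega>"
  unfolding emp_L_def by (rule cINF_lower[OF bdd_emp])

lemma emp_L_ln2: "\<omega> \<in> space M \<Longrightarrow> 0 < n' \<Longrightarrow> emp_L Xs zs ys d T q r n' p' \<omega> \<le> ln 2"
proof -
  assume o: "\<omega> \<in> space M" and n': "0 < n'"
  have "emp_L Xs zs ys d T q r n' p' \<omega> \<le> emp_risk Xs zs ys d T q n' p' (\<lambda>_. 0) \<omega>"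
    by (rule emp_L_le[OF o zero_in_ball]) (use r in simp)
  also have "\<dots> = ln 2" using n' by (simp add: emp_risk_def lin_pred_def logloss_zero)
  finally show ?thesis .
qed

lemma pen_grow: "0 < n' \<Longrightarrow> C_pen / real n' powr \<rho> * sqrt (real p' + 1) \<le> pen C_pen \<rho> d n' p' q"
proof -
  assume "0 < n'"
  have "real p' + 1 \<le> real (sd d p') * exp (real q)"
  proof -
    have "real p' + 1 \<le> real (sd d p')" using sd_ge[of d p'] d by simp
    also have "\<dots> \<le> real (sd d p') * exp (real q)" by (simp add: mult_le_cancel_left1)
    finally show ?thesis .
  qed
  then have "sqrt (real p' + 1) \<le> sqrt (real (sd d p') * exp (real q))" by (rule real_sqrt_le_mono)
  then have "C_pen * sqrt (real p' + 1) \<le> C_pen * sqrt (real (sd d p') * exp (real q))"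
    using Cpen by (intro mult_left_mono) auto
  then show ?thesis unfolding pen_def using \<open>0 < n'\<close>
    by (simp add: divide_right_mono mult.commute)
qed

lemma argmin_exists:
  assumes o: "\<omega> \<in> space M" and n': "0 < n'"
  shows "\<exists>p0. \<forall>p'. emp_L Xs zs ys d T q r n' p0 \<omega> + pen C_pen \<rho> d n' p0 q
                   \<le> emp_L Xs zs ys d T q r n' p' \<omega> + pen C_pen \<rho> d n' p' q"
proof -
  define f where "f p' = emp_L Xs zs ys d T q r n' p' \<omega> + pen C_pen \<rho> d n' p' q" for p'
  define c where "c = C_pen / real n' powr \<rho>"
  have c: "0 < c" using Cpen n' by (simp add: c_def)
  define Nb where "Nb = nat \<lceil>((ln 2 + pen C_pen \<rho> d n' 0 q) / c)\<^sup>2\<rceil>"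
  have big: "f 0 < f p'" if "Nb < p'" for p'
  proof -
    have "f 0 \<le> ln 2 + pen C_pen \<rho> d n' 0 q" using emp_L_ln2[OF o n'] by (simp add: f_def)
    also have "\<dots> < c * sqrt (real p' + 1)"
    proof -
      have "((ln 2 + pen C_pen \<rho> d n' 0 q) / c)\<^sup>2 \<le> real Nb" unfolding Nb_def by linarith
      also have "\<dots> < real p' + 1" using that by simp
      finally have "sqrt (((ln 2 + pen C_pen \<rho> d n' 0 q) / c)\<^sup>2) < sqrt (real p' + 1)"
        by (rule real_sqrt_less_mono)
      then have "\<bar>(ln 2 + pen C_pen \<rho> d n' 0 q) / c\<bar> < sqrt (real p' + 1)" by simp
      then have "(ln 2 + pen C_pen \<rho> d n' 0 q) / c < sqrt (real p' + 1)" by linarith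
      then show ?thesis using c by (simp add: pos_divide_less_eq mult.commute)
    qed
    also have "\<dots> \<le> pen C_pen \<rho> d n' p' q" using pen_grow[OF n', of p'] by (simp add: c_def)
    also have "\<dots> \<le> f p'" using emp_L_nonneg[OF o] by (simp add: f_def)
    finally show ?thesis .
  qed
  obtain m where m: "m \<in> f ` {..Nb}" "\<not> (\<exists>x\<in>f ` {..Nb}. x < m)"
    using ex_min_if_finite[of "f ` {..Nb}"] by auto
  then obtain p0 where p0: "p0 \<le> Nb" "m = f p0" by auto
  have "\<forall>p'. f p0 \<le> f p'"
  proof
    fix p'
    show "f p0 \<le> f p'"
    proof (cases "p' \<le> Nb")
      case True then show ?thesis using m p0 by force
    next
      case False
      then have "f 0 < f p'" using big by simp
      moreover have "f p0 \<le> f 0" using m p0 by force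
      ultimately show ?thesis by simp
    qed
  qed
  then show ?thesis unfolding f_def by blast
qed

lemma p_hat_prop:
  assumes o: "\<omega> \<in> space M" and n': "0 < n'"
  shows "emp_L Xs zs ys d T q r n' (p_hat Xs zs ys d T q r C_pen \<rho> n' \<omega>) \<omega> + pen C_pen \<rho> d n' (p_hat Xs zs ys d T q r C_pen \<rho> n' \<omega>) q
           \<le> emp_L Xs zs ys d T q r n' p' \<omega> + pen C_pen \<rho> d n' p' q"
  using LeastI_ex[OF argmin_exists[OF o n']] unfolding p_hat_def by blast

end


context P4
begin

lemma emp_lower:
  assumes o: "\<omega> \<in> space M" and n': "0 < n'" and gd: "\<forall>i<n'. goods i \<omega>"
    and thp: "\<theta>p \<in> ball1 d p' q r" and th: "\<theta> \<in> ball1 d p' q r"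
  shows "(\<Sum>i<n'. lossh d T (idx d p' q) \<theta>p (Ts i \<omega>)) / n'
          + (\<Sum>x\<in>idx d p' q. (\<theta> x - \<theta>p x) * ((\<Sum>i<n'. gradh d T (idx d p' q) \<theta>p x (Ts i \<omega>)) / n'))
         \<le> emp_risk Xs zs ys d T q n' p' \<theta> \<omega>"
proof -
  define S where "S = idx d p' q"
  have pt: "lossh d T S \<theta>p (Ts i \<omega>) + (\<Sum>x\<in>S. (\<theta> x - \<theta>p x) * gradh d T S \<theta>p x (Ts i \<omega>))
      \<le> lossh d T S \<theta> (Ts i \<omega>)" for i
  proof -
    have "(\<Sum>x\<in>S. (\<theta> x - \<theta>p x) * gradh d T S \<theta>p x (Ts i \<omega>))
        = (sigmoid (etah d T S \<theta>p (Ts i \<omega>)) - snd (Ts i \<omega>)) * (etah d T S \<theta> (Ts i \<omega>) - etah d T S \<theta>p (Ts i \<omega>))"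
      unfolding etah_diff gradh_def by (simp add: sum_distrib_left algebra_simps)
    then show ?thesis unfolding lossh_def
      using logloss_convex[where y="snd (Ts i \<omega>)" and b="etah d T S \<theta> (Ts i \<omega>)" and a="etah d T S \<theta>p (Ts i \<omega>)"]
      by simp
  qed
  define Gs where "Gs x = (\<Sum>i<n'. gradh d T S \<theta>p x (Ts i \<omega>))" for x
  define A where "A = (\<Sum>i<n'. lossh d T S \<theta>p (Ts i \<omega>))"
  define C' where "C' = (\<Sum>i<n'. lossh d T S \<theta> (Ts i \<omega>))"
  have "A + (\<Sum>x\<in>S. (\<theta> x - \<theta>p x) * Gs x)
      = (\<Sum>i<n'. lossh d T S \<theta>p (Ts i \<omega>) + (\<Sum>x\<in>S. (\<theta> x - \<theta>p x) * gradh d T S \<theta>p x (Ts i \<omega>)))"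
    unfolding A_def Gs_def by (simp add: sum.distrib sum_distrib_left sum.swap[of _ S])
  also have "\<dots> \<le> C'" unfolding C'_def by (intro sum_mono pt)
  finally have "(A + (\<Sum>x\<in>S. (\<theta> x - \<theta>p x) * Gs x)) / n' \<le> C' / n'" by (rule divide_right_mono) simp
  moreover have "(A + (\<Sum>x\<in>S. (\<theta> x - \<theta>p x) * Gs x)) / n' = A / n' + (\<Sum>x\<in>S. (\<theta> x - \<theta>p x) * (Gs x / n'))"
    by (simp add: add_divide_distrib sum_divide_distrib)
  ultimately have "A / n' + (\<Sum>x\<in>S. (\<theta> x - \<theta>p x) * (Gs x / n')) \<le> C' / n'" by simp
  then show ?thesis unfolding emp_eq[OF o] S_def[symmetric] A_def Gs_def C'_def .
qed

lemma core:
  assumes n1: "0 < n" and Dp: "0 < \<Delta>"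
    and Dd: "\<Delta> = L p - L pstar - pen C_pen \<rho> d n pstar q + pen C_pen \<rho> d n p q"
  shows "measure M {\<omega> \<in> space M. p_hat Xs zs ys d T q r C_pen \<rho> n \<omega> = p}
           \<le> (2 + 2 * real (card (idx d p q))) * exp (- 2 * real n * (\<Delta> / 4)\<^sup>2 / (2 * r * B)\<^sup>2)"
proof -
  obtain \<theta>p where thp: "\<theta>p \<in> ball1 d p q r" and Rp: "R p \<theta>p = L p" using attain by blast
  define S where "S = idx d p q"
  define Sst where "Sst = idx d pstar q"
  define G where "G x = (\<integral>\<omega>. gradh d T S \<theta>p x (Tr \<omega>) \<partial>M)" for x
  define e where "e = exp (- 2 * real n * (\<Delta> / 4)\<^sup>2 / (2 * r * B)\<^sup>2)"
  define E1 where "E1 = {\<omega> \<in> space M. (\<Sum>i<n. lossh d T S \<theta>p (Ts i \<omega>)) / n \<le> (\<integral>\<omega>. lossh d T S \<theta>p (Tr \<omega>) \<partial>M) - \<Delta> / 4}"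
  define E2 where "E2 = {\<omega> \<in> space M. (\<Sum>i<n. lossh d T Sst \<theta>star (Ts i \<omega>)) / n \<ge> (\<integral>\<omega>. lossh d T Sst \<theta>star (Tr \<omega>) \<partial>M) + \<Delta> / 4}"
  define E3 where "E3 x = {\<omega> \<in> space M. \<bar>(\<Sum>i<n. gradh d T S \<theta>p x (Ts i \<omega>)) / n - (\<integral>\<omega>. gradh d T S \<theta>p x (Tr \<omega>) \<partial>M)\<bar> \<ge> \<Delta> / (4 * r)}" for x
  have thp_r: "(\<Sum>x\<in>S. \<bar>\<theta>p x\<bar>) \<le> r" using thp by (simp add: ball1_def S_def)
  have ths_r: "(\<Sum>x\<in>Sst. \<bar>\<theta>star x\<bar>) \<le> r" using A3_attain by (simp add: ball1_def Sst_def)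
  have AEg: "AE \<omega> in M. \<forall>i\<in>{..<n}. goods i \<omega>" by (rule AE_finite_allI) (auto intro: AE_goods)
  obtain N where N: "{\<omega> \<in> space M. \<not> (\<forall>i\<in>{..<n}. goods i \<omega>)} \<subseteq> N" "emeasure M N = 0" "N \<in> sets M"
    using AE_E[OF AEg] by blast
  have E1m: "E1 \<in> sets M" unfolding E1_def by measurable
  have E2m: "E2 \<in> sets M" unfolding E2_def by measurable
  have E3m: "E3 x \<in> sets M" for x unfolding E3_def by measurable
  have L1: "(\<integral>\<omega>. lossh d T S \<theta>p (Tr \<omega>) \<partial>M) = L p" using Rp by (simp add: risk_eq S_def)
  have L2: "(\<integral>\<omega>. lossh d T Sst \<theta>star (Tr \<omega>) \<partial>M) = L pstar" using L_pstar by (simp add: risk_eq Sst_def)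
  have incl: "{\<omega> \<in> space M. p_hat Xs zs ys d T q r C_pen \<rho> n \<omega> = p} \<subseteq> E1 \<union> E2 \<union> (\<Union>x\<in>S. E3 x) \<union> N"
  proof
    fix \<omega> assume "\<omega> \<in> {\<omega> \<in> space M. p_hat Xs zs ys d T q r C_pen \<rho> n \<omega> = p}"
    then have o: "\<omega> \<in> space M" and ph: "p_hat Xs zs ys d T q r C_pen \<rho> n \<omega> = p" by auto
    show "\<omega> \<in> E1 \<union> E2 \<union> (\<Union>x\<in>S. E3 x) \<union> N"
    proof (rule ccontr)
      assume "\<omega> \<notin> E1 \<union> E2 \<union> (\<Union>x\<in>S. E3 x) \<union> N"
      then have n1': "\<omega> \<notin> E1" and n2': "\<omega> \<notin> E2" and n3': "\<And>x. x \<in> S \<Longrightarrow> \<omega> \<notin> E3 x" and nN: "\<omega> \<notin> N" by auto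
      have gd: "\<forall>i<n. goods i \<omega>" using N(1) nN o by auto
      have c1: "(\<Sum>i<n. lossh d T S \<theta>p (Ts i \<omega>)) / n > L p - \<Delta> / 4"
        using n1' o L1 unfolding E1_def by auto
      have c2: "(\<Sum>i<n. lossh d T Sst \<theta>star (Ts i \<omega>)) / n < L pstar + \<Delta> / 4"
        using n2' o L2 unfolding E2_def by auto
      have c3: "\<bar>(\<Sum>i<n. gradh d T S \<theta>p x (Ts i \<omega>)) / n - G x\<bar> < \<Delta> / (4 * r)" if "x \<in> S" for x
        using n3'[OF that] o unfolding E3_def G_def by auto
      have phi: "emp_L Xs zs ys d T q r n p \<omega> + pen C_pen \<rho> d n p q \<le> emp_L Xs zs ys d T q r n pstar \<omega> + pen C_pen \<rho> d n pstar q"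
        using p_hat_prop[OF o n1, of pstar] ph by simp
      have up: "emp_L Xs zs ys d T q r n pstar \<omega> < L pstar + \<Delta> / 4"
      proof -
        have "emp_L Xs zs ys d T q r n pstar \<omega> \<le> emp_risk Xs zs ys d T q n pstar \<theta>star \<omega>"
          by (rule emp_L_le[OF o A3_attain])
        also have "\<dots> = (\<Sum>i<n. lossh d T Sst \<theta>star (Ts i \<omega>)) / n" by (simp add: emp_eq[OF o] Sst_def)
        finally show ?thesis using c2 by simp
      qed
      have low: "L p - \<Delta> / 4 - \<Delta> / 2 \<le> emp_L Xs zs ys d T q r n p \<omega>"
        unfolding emp_L_def
      proof (rule cINF_greatest[OF ball_ne])
        fix \<theta> assume th: "\<theta> \<in> ball1 d p q r"
        have thr: "(\<Sum>x\<in>S. \<bar>\<theta> x\<bar>) \<le> r" using th by (simp add: ball1_def S_def)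
        have fo: "0 \<le> (\<Sum>x\<in>S. (\<theta> x - \<theta>p x) * G x)"
          using first_order[OF thp Rp th] by (simp add: G_def S_def)
        have split: "(\<Sum>x\<in>S. (\<theta> x - \<theta>p x) * ((\<Sum>i<n. gradh d T S \<theta>p x (Ts i \<omega>)) / n))
            = (\<Sum>x\<in>S. (\<theta> x - \<theta>p x) * G x) + (\<Sum>x\<in>S. (\<theta> x - \<theta>p x) * ((\<Sum>i<n. gradh d T S \<theta>p x (Ts i \<omega>)) / n - G x))"
          by (simp add: sum.distrib[symmetric] algebra_simps)
        have bnd: "\<bar>\<Sum>x\<in>S. (\<theta> x - \<theta>p x) * ((\<Sum>i<n. gradh d T S \<theta>p x (Ts i \<omega>)) / n - G x)\<bar>
                \<le> (\<Sum>x\<in>S. \<bar>\<theta> x - \<theta>p x\<bar> * (\<Delta> / (4 * r)))"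
        proof (rule order_trans[OF sum_abs], rule sum_mono)
          fix x assume x: "x \<in> S"
          show "\<bar>(\<theta> x - \<theta>p x) * ((\<Sum>i<n. gradh d T S \<theta>p x (Ts i \<omega>)) / n - G x)\<bar> \<le> \<bar>\<theta> x - \<theta>p x\<bar> * (\<Delta> / (4 * r))"
            unfolding abs_mult by (rule mult_left_mono[OF less_imp_le[OF c3[OF x]]]) simp
        qed
        have g: "0 - (\<Sum>x\<in>S. \<bar>\<theta> x - \<theta>p x\<bar> * (\<Delta> / (4 * r)))
            \<le> (\<Sum>x\<in>S. (\<theta> x - \<theta>p x) * ((\<Sum>i<n. gradh d T S \<theta>p x (Ts i \<omega>)) / n))"
          using split bnd fo by linarith
        have "(\<Sum>x\<in>S. \<bar>\<theta> x - \<theta>p x\<bar> * (\<Delta> / (4 * r))) = (\<Sum>x\<in>S. \<bar>\<theta> x - \<theta>p x\<bar>) * (\<Delta> / (4 * r))"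
          by (rule sum_distrib_right[symmetric])
        also have "\<dots> \<le> (2 * r) * (\<Delta> / (4 * r))"
        proof (rule mult_right_mono)
          have "(\<Sum>x\<in>S. \<bar>\<theta> x - \<theta>p x\<bar>) \<le> (\<Sum>x\<in>S. \<bar>\<theta> x\<bar> + \<bar>\<theta>p x\<bar>)" by (intro sum_mono abs_triangle_ineq4)
          also have "\<dots> \<le> 2 * r" using thr thp_r by (simp add: sum.distrib)
          finally show "(\<Sum>x\<in>S. \<bar>\<theta> x - \<theta>p x\<bar>) \<le> 2 * r" .
        qed (use Dp r in simp)
        also have "\<dots> = \<Delta> / 2" using r by simp
        finally have g2: "- (\<Delta> / 2) \<le> (\<Sum>x\<in>S. (\<theta> x - \<theta>p x) * ((\<Sum>i<n. gradh d T S \<theta>p x (Ts i \<omega>)) / n))"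
          using g by linarith
        have "(\<Sum>i<n. lossh d T S \<theta>p (Ts i \<omega>)) / n
          + (\<Sum>x\<in>S. (\<theta> x - \<theta>p x) * ((\<Sum>i<n. gradh d T S \<theta>p x (Ts i \<omega>)) / n))
         \<le> emp_risk Xs zs ys d T q n p \<theta> \<omega>"
          using emp_lower[OF o n1 gd thp th] by (simp add: S_def)
        then show "L p - \<Delta> / 4 - \<Delta> / 2 \<le> emp_risk Xs zs ys d T q n p \<theta> \<omega>" using c1 g2 by linarith
      qed
      show False using phi up low Dd by linarith
    qed
  qed
  have rB: "0 < r * B" using r B_pos by simp
  have bnd1: "AE \<omega> in M. lossh d T S \<theta>p (Tr \<omega>) \<in> {ln 2 - r * B..ln 2 + r * B}"
    using AE_good AE_space
  proof eventually_elim
    case (elim \<omega>)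
    have "\<bar>lossh d T (idx d p q) \<theta>p (Tr \<omega>) - ln 2\<bar> \<le> r * B"
      by (rule loss_bound[OF elim(2) elim(1) thp_r[unfolded S_def]])
    then show ?case by (auto simp: S_def abs_le_iff)
  qed
  have bnd2: "AE \<omega> in M. lossh d T Sst \<theta>star (Tr \<omega>) \<in> {ln 2 - r * B..ln 2 + r * B}"
    using AE_good AE_space
  proof eventually_elim
    case (elim \<omega>)
    have "\<bar>lossh d T (idx d pstar q) \<theta>star (Tr \<omega>) - ln 2\<bar> \<le> r * B"
      by (rule loss_bound[OF elim(2) elim(1) ths_r[unfolded Sst_def]])
    then show ?case by (auto simp: Sst_def abs_le_iff)
  qed
  have ab: "ln 2 - r * B < ln 2 + r * B" using rB by simp
  have e4: "0 \<le> \<Delta> / 4" using Dp by simp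
  have wid: "(ln 2 + r * B - (ln 2 - r * B))\<^sup>2 = (2 * r * B)\<^sup>2" by (simp add: algebra_simps)
  have h1: "measure M E1 \<le> e"
    using hoeff_iid(1)[OF M n1 Ts_meas Tr_meas indep_Ts distr_Ts lossh_meas bnd1 ab e4]
    unfolding E1_def e_def wid by simp
  have h2: "measure M E2 \<le> e"
    using hoeff_iid(2)[OF M n1 Ts_meas Tr_meas indep_Ts distr_Ts lossh_meas bnd2 ab e4]
    unfolding E2_def e_def wid by simp
  have h3: "measure M (E3 x) \<le> 2 * e" if x: "x \<in> S" for x
  proof -
    have bnd3: "AE \<omega> in M. gradh d T S \<theta>p x (Tr \<omega>) \<in> {- B..B}"
      using AE_good AE_space
    proof eventually_elim
      case (elim \<omega>)
      have "\<bar>gradh d T S \<theta>p x (Tr \<omega>)\<bar> \<le> B"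
        by (rule grad_bound[OF elim(2) elim(1)]) (use x in \<open>simp add: S_def\<close>)
      then show ?case by (auto simp: abs_le_iff)
    qed
    have ab3: "- B < B" using B_pos by simp
    have e3: "0 \<le> \<Delta> / (4 * r)" using Dp r by simp
    have m3: "measure M (E3 x) \<le> 2 * exp (- 2 * real n * (\<Delta> / (4 * r))\<^sup>2 / (B - (- B))\<^sup>2)"
      using hoeff_iid(3)[OF M n1 Ts_meas Tr_meas indep_Ts distr_Ts gradh_meas bnd3 ab3 e3]
      unfolding E3_def by simp
    have eqx: "- 2 * real n * (\<Delta> / (4 * r))\<^sup>2 / (B - (- B))\<^sup>2 = - 2 * real n * (\<Delta> / 4)\<^sup>2 / (2 * r * B)\<^sup>2"
      using r B_pos by (simp add: field_simps power2_eq_square)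
    show ?thesis using m3 unfolding eqx e_def .
  qed
  have "measure M {\<omega> \<in> space M. p_hat Xs zs ys d T q r C_pen \<rho> n \<omega> = p} \<le> measure M (E1 \<union> E2 \<union> (\<Union>x\<in>S. E3 x) \<union> N)"
  proof (cases "{\<omega> \<in> space M. p_hat Xs zs ys d T q r C_pen \<rho> n \<omega> = p} \<in> sets M")
    case True
    show ?thesis by (rule finite_measure_mono[OF incl]) (use E1m E2m E3m N(3) finite_idx in \<open>auto simp: S_def\<close>)
  next
    case False then show ?thesis by (simp add: measure_notin_sets)
  qed
  also have "\<dots> \<le> measure M (E1 \<union> E2 \<union> (\<Union>x\<in>S. E3 x)) + measure M N"
    by (rule measure_Un_le) (use E1m E2m E3m N(3) finite_idx in \<open>auto simp: S_def\<close>)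
  also have "measure M N = 0" using N(2) by (simp add: measure_def)
  also have "measure M (E1 \<union> E2 \<union> (\<Union>x\<in>S. E3 x)) \<le> measure M (E1 \<union> E2) + measure M (\<Union>x\<in>S. E3 x)"
    by (rule measure_Un_le) (use E1m E2m E3m finite_idx in \<open>auto simp: S_def\<close>)
  also have "measure M (E1 \<union> E2) \<le> measure M E1 + measure M E2"
    by (rule measure_Un_le[OF E1m E2m])
  also have "measure M (\<Union>x\<in>S. E3 x) \<le> (\<Sum>x\<in>S. measure M (E3 x))"
    by (rule measure_UNION_le) (use E3m finite_idx in \<open>auto simp: S_def\<close>)
  also have "(\<Sum>x\<in>S. measure M (E3 x)) \<le> (\<Sum>x\<in>S. 2 * e)" by (rule sum_mono[OF h3])
  finally have "measure M {\<omega> \<in> space M. p_hat Xs zs ys d T q r C_pen \<rho> n \<omega> = p}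
      \<le> e + e + real (card S) * (2 * e) + 0" using h1 h2 by simp
  then show ?thesis by (simp add: e_def S_def algebra_simps)
qed

end


lemma final_numeric:
  fixes B r \<Delta> nr D D' c5 :: real
  assumes B: "0 < B" and r: "0 < r" and Dp: "0 < \<Delta>" and nr: "0 \<le> nr" and D0: "0 \<le> D" and DD: "D \<le> D'"
    and big: "D' * (432 * (2 * B) * r * sqrt pi)\<^sup>2 \<le> nr * \<Delta>\<^sup>2"
    and c5: "c5 = 1 / (8 * r * (288 * (2 * B)\<^sup>2 * r + 2 * B))"
  shows "(2 + 2 * D) * exp (- 2 * nr * (\<Delta> / 4)\<^sup>2 / (2 * r * B)\<^sup>2) \<le> 148 * exp (- nr * (c5 / 4) * \<Delta>\<^sup>2)"
proof -
  define Ex where "Ex = nr * \<Delta>\<^sup>2 / (32 * r\<^sup>2 * B\<^sup>2)"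
  have rB: "0 < r * B" using r B by simp
  have e1: "- 2 * nr * (\<Delta> / 4)\<^sup>2 / (2 * r * B)\<^sup>2 = - Ex"
    unfolding Ex_def using rB by (simp add: field_simps power2_eq_square)
  have c5le: "c5 \<le> 1 / (9216 * r\<^sup>2 * B\<^sup>2)"
  proof -
    have "9216 * r\<^sup>2 * B\<^sup>2 \<le> 8 * r * (288 * (2 * B)\<^sup>2 * r + 2 * B)"
      using r B by (simp add: power2_eq_square algebra_simps)
    moreover have "0 < 9216 * r\<^sup>2 * B\<^sup>2" using r B by simp
    ultimately show ?thesis unfolding c5
      using frac_le[of 1 1 "9216 * r\<^sup>2 * B\<^sup>2" "8 * r * (288 * (2 * B)\<^sup>2 * r + 2 * B)"] by simp
  qed
  have x1: "nr * (c5 / 4) * \<Delta>\<^sup>2 \<le> Ex / 1152"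
  proof -
    have "nr * (c5 / 4) * \<Delta>\<^sup>2 = (nr * \<Delta>\<^sup>2) * c5 / 4" by simp
    also have "\<dots> \<le> (nr * \<Delta>\<^sup>2) * (1 / (9216 * r\<^sup>2 * B\<^sup>2)) / 4"
      using c5le nr by (intro divide_right_mono mult_left_mono) auto
    also have "\<dots> = Ex / 1152" unfolding Ex_def using rB by (simp add: field_simps power2_eq_square)
    finally show ?thesis .
  qed
  have x2: "D \<le> Ex / 2"
  proof -
    have pi3: "3 \<le> pi" using pi_gt3 by simp
    have "(432 * (2 * B) * r * sqrt pi)\<^sup>2 = 746496 * pi * r\<^sup>2 * B\<^sup>2"
      by (simp add: power2_eq_square algebra_simps)
    then have "D' * (746496 * pi * r\<^sup>2 * B\<^sup>2) \<le> nr * \<Delta>\<^sup>2" using big by simp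
    moreover have "D' * (64 * r\<^sup>2 * B\<^sup>2) \<le> D' * (746496 * pi * r\<^sup>2 * B\<^sup>2)"
      using D0 DD pi3 r B by (intro mult_left_mono) (auto simp: power2_eq_square)
    ultimately have "D' * (64 * r\<^sup>2 * B\<^sup>2) \<le> nr * \<Delta>\<^sup>2" by linarith
    moreover have "0 < 64 * r\<^sup>2 * B\<^sup>2" using r B by simp
    ultimately have "D' \<le> nr * \<Delta>\<^sup>2 / (64 * r\<^sup>2 * B\<^sup>2)" by (simp add: pos_le_divide_eq)
    also have "\<dots> = Ex / 2" unfolding Ex_def using rB by (simp add: field_simps power2_eq_square)
    finally show ?thesis using DD by simp
  qed
  have "(2 + 2 * D) * exp (- 2 * nr * (\<Delta> / 4)\<^sup>2 / (2 * r * B)\<^sup>2) = 2 * (1 + D) * exp (- Ex)"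
    unfolding e1 by (simp add: algebra_simps)
  also have "\<dots> \<le> 2 * exp D * exp (- Ex)"
    using exp_ge_add_one_self[of D] by (intro mult_right_mono mult_left_mono) (auto simp: add.commute)
  also have "\<dots> = 2 * exp (D - Ex)" by (simp add: exp_diff exp_minus field_simps)
  also have "\<dots> \<le> 2 * exp (- (Ex / 1152))"
  proof -
    have "0 \<le> Ex" unfolding Ex_def using nr by simp
    then have "D - Ex \<le> - (Ex / 1152)" using x2 by linarith
    then show ?thesis by simp
  qed
  also have "\<dots> \<le> 148 * exp (- (Ex / 1152))" by simp
  also have "\<dots> \<le> 148 * exp (- nr * (c5 / 4) * \<Delta>\<^sup>2)" using x1 by simp
  finally show ?thesis .
qed


context P4
begin

lemma main:
  "measure M {\<omega> \<in> space M. p_hat Xs zs ys d T q r C_pen \<rho> n \<omega> = p}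
     \<le> 148 * exp (- real n * (c5 / 4) *
           (L p - L pstar - pen C_pen \<rho> d n pstar q + pen C_pen \<rho> d n p q)\<^sup>2)"
proof (cases "n = 0")
  case True
  have "measure M {\<omega> \<in> space M. p_hat Xs zs ys d T q r C_pen \<rho> n \<omega> = p} \<le> 1" by (rule prob_le_1)
  moreover have "1 \<le> 148 * exp (- real n * (c5 / 4) *
           (L p - L pstar - pen C_pen \<rho> d n pstar q + pen C_pen \<rho> d n p q)\<^sup>2)" using True by simp
  ultimately show ?thesis by linarith
next
  case False
  then have n1: "0 < n" by simp
  have ps: "0 < pstar" using p by simp
  define gap where "gap = L (pstar - 1) - R pstar \<theta>star"
  have gap: "0 < gap" using gap_pos[OF ps] by (simp add: gap_def)
  have Lp: "L (pstar - 1) \<le> L p" using L_mono[of p "pstar - 1"] p by simp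
  have Lps: "L pstar = R pstar \<theta>star" by (rule L_pstar)
  define a where "a = sqrt (exp (real q)) * C_pen"
  define K where "K = 432 * C * r * sqrt pi"
  define D' where "D' = real (sd d pstar + q)"
  define base where "base = (2 * sqrt D' / gap) * (a + K)"
  have a0: "0 < a" using Cpen by (simp add: a_def)
  have C2: "C = 2 * B" by (rule C_eq)
  have K0: "0 < K" using B_pos r by (simp add: K_def C2)
  have D'0: "0 \<le> D'" by (simp add: D'_def)
  have base0: "0 < base" unfolding base_def using gap a0 K0 q by (simp add: D'_def)
  have n3eq: "n3 = nat \<lceil>base powr (1 / \<rho>)\<rceil>"
    using n3_def unfolding base_def a_def K_def D'_def gap_def by simp
  have nb: "base powr (1 / \<rho>) \<le> real n"
  proof -
    have "base powr (1 / \<rho>) \<le> real n3" unfolding n3eq by (rule real_nat_ceiling_ge)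
    also have "\<dots> \<le> real n" using n by simp
    finally show ?thesis .
  qed
  have npow: "base \<le> real n powr \<rho>"
  proof -
    have "(base powr (1 / \<rho>)) powr \<rho> \<le> real n powr \<rho>"
      by (rule powr_mono2) (use \<rho> nb in auto)
    moreover have "(base powr (1 / \<rho>)) powr \<rho> = base"
      using base0 \<rho> by (simp add: powr_powr)
    ultimately show ?thesis by simp
  qed
  have npos: "0 < real n powr \<rho>" using n1 by simp
  have pen_st: "pen C_pen \<rho> d n pstar q \<le> gap / 2"
  proof -
    have "C_pen * sqrt (real (sd d pstar) * exp (real q)) = a * sqrt (real (sd d pstar))"
      by (simp add: a_def real_sqrt_mult)
    also have "\<dots> \<le> a * sqrt D'" using a0 by (intro mult_left_mono) (auto simp: D'_def)
    finally have num: "C_pen * sqrt (real (sd d pstar) * exp (real q)) \<le> a * sqrt D'" .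
    have "pen C_pen \<rho> d n pstar q \<le> a * sqrt D' / real n powr \<rho>"
      unfolding pen_def using num npos by (intro divide_right_mono) auto
    also have "\<dots> \<le> a * sqrt D' / base"
      using npow base0 a0 D'0 npos by (intro divide_left_mono) auto
    also have "\<dots> \<le> gap / 2"
    proof -
      have gb: "gap / 2 * base = sqrt D' * (a + K)"
        unfolding base_def using gap by (simp add: field_simps)
      have "a * sqrt D' \<le> sqrt D' * (a + K)" using K0 D'0 by (simp add: algebra_simps)
      then have "a * sqrt D' \<le> gap / 2 * base" using gb by simp
      then show ?thesis using base0 by (simp add: pos_divide_le_eq)
    qed
    finally show ?thesis .
  qed
  have pen_p0: "0 \<le> pen C_pen \<rho> d n p q" using Cpen by (simp add: pen_def)
  define \<Delta> where "\<Delta> = L p - L pstar - pen C_pen \<rho> d n pstar q + pen C_pen \<rho> d n p q"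
  have Dg: "gap / 2 \<le> \<Delta>" unfolding \<Delta>_def using Lp Lps pen_st pen_p0 by (simp add: gap_def)
  have Dp: "0 < \<Delta>" using Dg gap by simp
  have nbig: "base\<^sup>2 \<le> real n"
  proof -
    have "base\<^sup>2 \<le> (real n powr \<rho>)\<^sup>2" using npow base0 by (intro power_mono) auto
    also have "(real n powr \<rho>)\<^sup>2 = real n powr (\<rho> + \<rho>)" unfolding power2_eq_square by (rule powr_add[symmetric])
    also have "\<dots> \<le> real n powr 1" by (rule powr_mono) (use \<rho> n1 in auto)
    also have "\<dots> = real n" using n1 by simp
    finally show ?thesis .
  qed
  have big: "D' * K\<^sup>2 \<le> real n * \<Delta>\<^sup>2"
  proof -
    have gb2: "base * (gap / 2) = sqrt D' * (a + K)"
      unfolding base_def using gap by (simp add: field_simps)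
    have "base\<^sup>2 * (gap / 2)\<^sup>2 = (base * (gap / 2))\<^sup>2" by (rule power_mult_distrib[symmetric])
    also have "\<dots> = D' * (a + K)\<^sup>2" unfolding gb2 using D'0 by (simp add: power_mult_distrib)
    finally have "base\<^sup>2 * (gap / 2)\<^sup>2 = D' * (a + K)\<^sup>2" .
    moreover have "D' * K\<^sup>2 \<le> D' * (a + K)\<^sup>2"
      using a0 K0 D'0 by (intro mult_left_mono power_mono) auto
    moreover have "base\<^sup>2 * (gap / 2)\<^sup>2 \<le> real n * \<Delta>\<^sup>2"
      using nbig Dg gap by (intro mult_mono power_mono) auto
    ultimately show ?thesis by linarith
  qed
  have cardD: "real (card (idx d p q)) \<le> D'"
  proof -
    have "card (idx d p q) \<le> sd d p + q" by (rule card_idx)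
    also have "\<dots> \<le> sd d pstar + q" using sd_mono[of p pstar d] p by simp
    finally show ?thesis by (simp add: D'_def)
  qed
  have "measure M {\<omega> \<in> space M. p_hat Xs zs ys d T q r C_pen \<rho> n \<omega> = p}
      \<le> (2 + 2 * real (card (idx d p q))) * exp (- 2 * real n * (\<Delta> / 4)\<^sup>2 / (2 * r * B)\<^sup>2)"
    by (rule core[OF n1 Dp \<Delta>_def])
  also have "\<dots> \<le> 148 * exp (- real n * (c5 / 4) * \<Delta>\<^sup>2)"
  proof (rule final_numeric[OF B_pos r Dp _ _ cardD])
    show "D' * (432 * (2 * B) * r * sqrt pi)\<^sup>2 \<le> real n * \<Delta>\<^sup>2" using big by (simp add: K_def C2)
    show "c5 = 1 / (8 * r * (288 * (2 * B)\<^sup>2 * r + 2 * B))" using c5_def by (simp add: C2)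
  qed auto
  finally show ?thesis by (simp add: \<Delta>_def)
qed

end

theorem proposition4:
  fixes M :: "'w measure"
    and X :: "'w \<Rightarrow> path" and z :: "'w \<Rightarrow> nat \<Rightarrow> real" and y :: "'w \<Rightarrow> real"
    and Xs :: "nat \<Rightarrow> 'w \<Rightarrow> path" and zs :: "nat \<Rightarrow> 'w \<Rightarrow> nat \<Rightarrow> real" and ys :: "nat \<Rightarrow> 'w \<Rightarrow> real"
    and d q :: nat and T :: real and x0 :: "nat \<Rightarrow> real"
    and F :: "path \<Rightarrow> real" and \<gamma> :: "nat \<Rightarrow> real"
    and C_F C_\<gamma> C_X C_z r \<rho> C_pen :: real
    and pstar :: nat and \<theta>star :: "nat list + nat \<Rightarrow> real"
    and n p :: nat
    and C c5 :: real and L :: "nat \<Rightarrow> real" and n3 :: nat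
  assumes M: "prob_space M"
    and T: "T > 0" and d: "d \<ge> 2" and q: "q \<ge> 1"
    and \<rho>: "0 < \<rho>" "\<rho> < 1/2" and Cpen: "C_pen > 0"
    \<comment> \<open>the random triple (X, z, y) and its i.i.d. copies\<close>
    and X_meas: "X \<in> M \<rightarrow>\<^sub>M path_space" and z_meas: "z \<in> M \<rightarrow>\<^sub>M vec_space"
    and y_meas: "y \<in> borel_measurable M"
    and X_dom: "\<forall>\<omega>\<in>space M. X \<omega> \<in> path_dom d T x0"
    and y01: "\<forall>\<omega>\<in>space M. y \<omega> \<in> {0, 1}"
    and samples_meas: "\<forall>i. (\<lambda>\<omega>. ((Xs i \<omega>, zs i \<omega>), ys i \<omega>)) \<in> M \<rightarrow>\<^sub>M triple_space"
    and samples_indep: "prob_space.indep_vars M (\<lambda>_. triple_space) (\<lambda>i \<omega>. ((Xs i \<omega>, zs i \<omega>), ys i \<omega>)) UNIV"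
    and samples_distr: "\<forall>i. distr M triple_space (\<lambda>\<omega>. ((Xs i \<omega>, zs i \<omega>), ys i \<omega>))
                          = distr M triple_space (\<lambda>\<omega>. ((X \<omega>, z \<omega>), y \<omega>))"
    and Xs_dom: "\<forall>i. \<forall>\<omega>\<in>space M. Xs i \<omega> \<in> path_dom d T x0"
    and ys01: "\<forall>i. \<forall>\<omega>\<in>space M. ys i \<omega> \<in> {0, 1}"
    \<comment> \<open>the logistic model: logit P(y = 1 | X, z) = F(X) + z^T gamma\<close>
    and F_cont: "cont_functional d T x0 F"
    and F_meas: "(\<lambda>\<omega>. F (X \<omega>)) \<in> borel_measurable M"
    and logit: "\<forall>A \<in> sets (path_space \<Otimes>\<^sub>M vec_space).
       measure M {\<omega> \<in> space M. y \<omega> = 1 \<and> (X \<omega>, z \<omega>) \<in> A}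
       = (\<integral>\<omega>. indicator A (X \<omega>, z \<omega>) * sigmoid (F (X \<omega>) + (\<Sum>j<q. z \<omega> j * \<gamma> j)) \<partial>M)"
    \<comment> \<open>(A.1)\<close>
    and A1_F: "\<exists>c < C_F. \<forall>Y \<in> path_dom d T x0. \<bar>F Y\<bar> \<le> c"
    and A1_\<gamma>: "(\<Sum>j<q. \<bar>\<gamma> j\<bar>) \<le> C_\<gamma>"
    \<comment> \<open>(A.2), for the triple and for its copies\<close>
    and A2: "AE \<omega> in M. tv d T (X \<omega>) < ereal C_X \<and> vnorm q (z \<omega>) < C_z"
    and A2s: "\<forall>i. AE \<omega> in M. tv d T (Xs i \<omega>) < ereal C_X \<and> vnorm q (zs i \<omega>) < C_z"
    \<comment> \<open>(A.4)\<close>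
    and A4: "(INF G\<gamma> \<in> {(G, \<gamma>'). cont_functional d T x0 G \<and> (\<forall>Y\<in>path_dom d T x0. \<bar>G Y\<bar> \<le> C_F)
                              \<and> (\<Sum>j<q. \<bar>\<gamma>' j\<bar>) \<le> C_\<gamma>}.
               \<integral>\<omega>. logloss (y \<omega>) (fst G\<gamma> (X \<omega>) + (\<Sum>j<q. z \<omega> j * snd G\<gamma> j)) \<partial>M)
            \<le> (INF p\<theta> \<in> (SIGMA p:UNIV. coef_space d p q). risk M X z y d T q (fst p\<theta>) (snd p\<theta>))"
    \<comment> \<open>(A.3)\<close>
    and r: "r > 0"
    and A3_attain: "\<theta>star \<in> ball1 d pstar q r"
    and A3_opt: "risk M X z y d T q pstar \<theta>star
                   = (INF p\<theta> \<in> (SIGMA p:UNIV. coef_space d p q). risk M X z y d T q (fst p\<theta>) (snd p\<theta>))"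
    and A3_min: "\<forall>p' < pstar. \<not> (\<exists>\<theta> \<in> ball1 d p' q r. risk M X z y d T q p' \<theta>
                   = (INF p\<theta> \<in> (SIGMA p:UNIV. coef_space d p q). risk M X z y d T q (fst p\<theta>) (snd p\<theta>)))"
    and C_def: "C = 2 * (C_z + exp (C_X + T))"
    and L_def: "L = (\<lambda>p. (INF \<theta> \<in> ball1 d p q r. risk M X z y d T q p \<theta>))"
    and c5_def: "c5 = 1 / (8 * r * (288 * C\<^sup>2 * r + C))"
    and n3_def: "n3 = nat \<lceil>((2 * sqrt (real (sd d pstar + q)) / (L (pstar - 1) - risk M X z y d T q pstar \<theta>star))
                      * (sqrt (exp (real q)) * C_pen + 432 * C * r * sqrt pi)) powr (1 / \<rho>)\<rceil>"
    and p: "p < pstar" and n: "n \<ge> n3"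
  shows "measure M {\<omega> \<in> space M. p_hat Xs zs ys d T q r C_pen \<rho> n \<omega> = p}
           \<le> 148 * exp (- real n * (c5 / 4) *
                 (L p - L pstar - pen C_pen \<rho> d n pstar q + pen C_pen \<rho> d n p q)\<^sup>2)"
proof -
  interpret P4 M X z y Xs zs ys d q T x0 F \<gamma> C_F C_\<gamma> C_X C_z r \<rho> C_pen pstar \<theta>star n p C c5 L n3
    by (rule P4.intro) (rule assms)+
  show ?thesis by (rule main)
qed


end
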